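(* Let $x\in\mathbb{R}^I$ and an admissible system $\pi=(\Omega,\mathcal{F},(\mathcal{F}_t),P,U,W)$ be given. Then there exists a controlled process $X$ associated with $x$ and $\pi$, i.e., a continuous $(\mathcal{F}_t)$-adapted process with $\int_0^t|b(X(s),U(s))|ds<\infty$ $P$-a.s. and $X(t)=x+rW(t)+\int_0^tb(X(s),U(s))ds$ for $0\le t<\infty$. Moreover, if $X$ and $\bar X$ are both controlled processes associated with $x$ and $\pi$, then $X(t)=\bar X(t)$ for all $t\ge0$, $P$-a.s.
   Context: Let $I,J\ge1$, $\mathcal{I}=\{1,\dots,I\}$, $\mathcal{J}=\{I+1,\dots,I+J\}$, $\mathcal{E}\subset\mathcal{I}\times\mathcal{J}$, $i\sim j$ iff $(i,j)\in\mathcal{E}$; the bipartite graph $\mathcal{T}$ on $\mathcal{I}\cup\mathcal{J}$ with edges $\mathcal{E}$ is a tree. Constants: $\mu_{ij}>0$ for $(i,j)\in\mathcal{E}$, $\mu_{ij}=0$ otherwise; $\theta_i\ge0$, $r_i>0$, $\ell_i\in\mathbb{R}$; $r=\mathrm{diag}(r_i)$. $e=(1,\dots,1)'$. $\mathbb{U}=\{(u,v)\in\mathbb{R}^I\times\mathbb{R}^J:u_i,v_j\ge0,\ e\cdot u=e\cdot v=1\}$. Since $\mathcal{T}$ is a tree, for $\alpha\in\mathbb{R}^I,\beta\in\mathbb{R}^J$ with $\sum\alpha_i=\sum\beta_j$ there is a unique $\psi=G(\alpha,\beta)$ with $\psi_{ij}=0$ for $i\not\sim j$, $\sum_j\psi_{ij}=\alpha_i$,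 $\sum_i\psi_{ij}=\beta_j$ ($G$ is linear). Put $\widehat G(x,U)=G(x-(e\cdot x)^+u,-(e\cdot x)^-v)$ for $U=(u,v)\in\mathbb{U}$, and $b_i(x,U)=-\sum_j\mu_{ij}\widehat G(x,U)_{ij}-\theta_i(e\cdot x)^+u_i+\ell_i$, $b=(b_i)$. An admissible system $\pi=(\Omega,\mathcal{F},(\mathcal{F}_t),P,U,W)$ consists of a complete filtered probability space, an $(\mathcal{F}_t)$-progressively measurable $\mathbb{U}$-valued process $U$ and a standard $I$-dimensional $(\mathcal{F}_t)$-Brownian motion $W$. *)

theory Defs
  imports "HOL-Probability.Probability"
begin

definition adj :: "('i \<times> 'j) set \<Rightarrow> ('i + 'j) \<Rightarrow> ('i + 'j) \<Rightarrow> bool" where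
  "adj E v w \<longleftrightarrow> (\<exists>i j. (i, j) \<in> E \<and> ((v = Inl i \<and> w = Inr j) \<or> (v = Inr j \<and> w = Inl i)))"

text \<open>A graph is a tree iff it is connected and acyclic; acyclic means every
  edge is a bridge (removing it disconnects its end points).\<close>

definition is_tree :: "('i \<times> 'j) set \<Rightarrow> bool" where
  "is_tree E \<longleftrightarrow>
     (\<forall>v w. (adj E)\<^sup>*\<^sup>* v w) \<and>
     (\<forall>e\<in>E. \<not> (adj (E - {e}))\<^sup>*\<^sup>* (Inl (fst e)) (Inr (snd e)))"

definition G :: "('i::finite \<times> 'j::finite) set \<Rightarrow> real^'i \<Rightarrow> real^'j \<Rightarrow> ('i \<Rightarrow> 'j \<Rightarrow> real)" where
  "G E \<alpha> \<beta> = (THE \<psi>. (\<forall>i j. (i, j) \<notin> E \<longrightarrow> \<psi> i j = 0) \<and>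
                      (\<forall>i. (\<Sum>j\<in>UNIV. \<psi> i j) = \<alpha> $ i) \<and>
                      (\<forall>j. (\<Sum>i\<in>UNIV. \<psi> i j) = \<beta> $ j))"

definition esum :: "real^'n::finite \<Rightarrow> real" where
  "esum x = (\<Sum>i\<in>UNIV. x $ i)"

definition posp :: "real \<Rightarrow> real" where "posp a = max a 0"
definition negp :: "real \<Rightarrow> real" where "negp a = max (- a) 0"

definition UU :: "((real^'i::finite) \<times> (real^'j::finite)) set" where
  "UU = {(u, v). (\<forall>i. u $ i \<ge> 0) \<and> (\<forall>j. v $ j \<ge> 0) \<and> esum u = 1 \<and> esum v = 1}"

definition Ghat :: "('i::finite \<times> 'j::finite) set \<Rightarrow> real^'i \<Rightarrow> ((real^'i) \<times> (real^'j)) \<Rightarrow> ('i \<Rightarrow> 'j \<Rightarrow> real)" where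
  "Ghat E x U = G E (x - posp (esum x) *\<^sub>R fst U) (- (negp (esum x) *\<^sub>R snd U))"

definition drift ::
  "('i::finite \<times> 'j::finite) set \<Rightarrow> ('i \<Rightarrow> 'j \<Rightarrow> real) \<Rightarrow> ('i \<Rightarrow> real) \<Rightarrow> ('i \<Rightarrow> real)
    \<Rightarrow> real^'i \<Rightarrow> ((real^'i) \<times> (real^'j)) \<Rightarrow> real^'i" where
  "drift E \<mu> \<theta> l x U = (\<chi> i. - (\<Sum>j\<in>UNIV. \<mu> i j * Ghat E x U i j)
                           - \<theta> i * posp (esum x) * (fst U $ i) + l i)"

definition complete_space_measure :: "'a measure \<Rightarrow> bool" where
  "complete_space_measure M \<longleftrightarrow> (\<forall>A N. N \<in> null_sets M \<and> A \<subseteq> N \<longrightarrow> A \<in> sets M)"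

definition filtration_on :: "'a measure \<Rightarrow> (real \<Rightarrow> 'a measure) \<Rightarrow> bool" where
  "filtration_on M F \<longleftrightarrow>
     (\<forall>t\<ge>0. space (F t) = space M \<and> sets (F t) \<subseteq> sets M) \<and>
     (\<forall>s t. 0 \<le> s \<and> s \<le> t \<longrightarrow> sets (F s) \<subseteq> sets (F t))"

definition adapted :: "(real \<Rightarrow> 'a measure) \<Rightarrow> (real \<Rightarrow> 'a \<Rightarrow> 'b::topological_space) \<Rightarrow> bool" where
  "adapted F X \<longleftrightarrow> (\<forall>t\<ge>0. X t \<in> borel_measurable (F t))"

definition prog_measurable :: "(real \<Rightarrow> 'a measure) \<Rightarrow> (real \<Rightarrow> 'a \<Rightarrow> 'b::topological_space) \<Rightarrow> bool" where
  "prog_measurable F X \<longleftrightarrow>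
     (\<forall>t\<ge>0. (\<lambda>(s, \<omega>). X s \<omega>) \<in> borel_measurable (restrict_space lborel {0..t} \<Otimes>\<^sub>M F t))"

definition brownian_motion :: "'a measure \<Rightarrow> (real \<Rightarrow> 'a measure) \<Rightarrow> (real \<Rightarrow> 'a \<Rightarrow> real^'i::finite) \<Rightarrow> bool" where
  "brownian_motion M F W \<longleftrightarrow>
     adapted F W \<and>
     (\<forall>\<omega>\<in>space M. W 0 \<omega> = 0 \<and> continuous_on {0..} (\<lambda>t. W t \<omega>)) \<and>
     (\<forall>s t. 0 \<le> s \<and> s < t \<longrightarrow>
        prob_space.indep_vars M (\<lambda>_. borel) (\<lambda>i \<omega>. (W t \<omega> - W s \<omega>) $ i) UNIV \<and>
        (\<forall>i. distributed M lborel (\<lambda>\<omega>. (W t \<omega> - W s \<omega>) $ i) (normal_density 0 (sqrt (t - s)))) \<and>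
        (\<forall>A\<in>sets (F s). \<forall>B\<in>sets borel.
           measure M (A \<inter> {\<omega>\<in>space M. W t \<omega> - W s \<omega> \<in> B})
             = measure M A * measure M {\<omega>\<in>space M. W t \<omega> - W s \<omega> \<in> B}))"

definition admissible ::
  "'a measure \<Rightarrow> (real \<Rightarrow> 'a measure) \<Rightarrow> (real \<Rightarrow> 'a \<Rightarrow> (real^'i::finite) \<times> (real^'j::finite))
     \<Rightarrow> (real \<Rightarrow> 'a \<Rightarrow> real^'i) \<Rightarrow> bool" where
  "admissible M F U W \<longleftrightarrow>
     prob_space M \<and> complete_space_measure M \<and> filtration_on M F \<and>
     prog_measurable F U \<and> (\<forall>t\<ge>0. \<forall>\<omega>\<in>space M. U t \<omega> \<in> UU) \<and>
     brownian_motion M F W"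

definition controlled_process ::
  "('i::finite \<times> 'j::finite) set \<Rightarrow> ('i \<Rightarrow> 'j \<Rightarrow> real) \<Rightarrow> ('i \<Rightarrow> real) \<Rightarrow> ('i \<Rightarrow> real) \<Rightarrow> ('i \<Rightarrow> real)
   \<Rightarrow> real^'i \<Rightarrow> 'a measure \<Rightarrow> (real \<Rightarrow> 'a measure) \<Rightarrow> (real \<Rightarrow> 'a \<Rightarrow> (real^'i) \<times> (real^'j))
   \<Rightarrow> (real \<Rightarrow> 'a \<Rightarrow> real^'i) \<Rightarrow> (real \<Rightarrow> 'a \<Rightarrow> real^'i) \<Rightarrow> bool" where
  "controlled_process E \<mu> \<theta> r l x M F U W X \<longleftrightarrow>
     (\<forall>\<omega>\<in>space M. continuous_on {0..} (\<lambda>t. X t \<omega>)) \<and> adapted F X \<and>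
     (AE \<omega> in M. \<forall>t\<ge>0.
        set_integrable lborel {0..t} (\<lambda>s. drift E \<mu> \<theta> l (X s \<omega>) (U s \<omega>)) \<and>
        X t \<omega> = x + (\<chi> i. r i * W t \<omega> $ i)
                 + (LINT s:{0..t}|lborel. drift E \<mu> \<theta> l (X s \<omega>) (U s \<omega>)))"

end

theory Submission
  imports Defs
begin

lemma esum_add: "esum (x + y) = esum x + esum y"
  by (simp add: esum_def sum.distrib)
lemma esum_diff: "esum (x - y) = esum x - esum y"
  by (simp add: esum_def sum_subtractf)
lemma esum_scale: "esum (c *\<^sub>R x) = c * esum x"
  by (simp add: esum_def sum_distrib_left)
lemma esum_uminus: "esum (- x) = - esum x"
  by (simp add: esum_def sum_negf)
lemma esum_axis: "esum (axis k (1::real)) = 1"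
  by (simp add: esum_def axis_def)
lemma esum_zero: "esum 0 = 0"
  by (simp add: esum_def)

lemma split_UNIV: "(\<Sum>j\<in>(UNIV::'a::finite set). f j) = (\<Sum>j\<in>S. f j) + (\<Sum>j\<in>-S. f j)"
  using sum.subset_diff[of S "UNIV::'a set" f] by (simp add: Compl_eq_Diff_UNIV add.commute)

definition Gp :: "('i::finite \<times> 'j::finite) set \<Rightarrow> real^'i \<Rightarrow> real^'j \<Rightarrow> ('i \<Rightarrow> 'j \<Rightarrow> real) \<Rightarrow> bool" where
  "Gp E \<alpha> \<beta> \<psi> \<longleftrightarrow> (\<forall>i j. (i, j) \<notin> E \<longrightarrow> \<psi> i j = 0) \<and>
                      (\<forall>i. (\<Sum>j\<in>UNIV. \<psi> i j) = \<alpha> $ i) \<and>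
                      (\<forall>j. (\<Sum>i\<in>UNIV. \<psi> i j) = \<beta> $ j)"

lemma cut_zero:
  fixes E :: "('i::finite \<times> 'j::finite) set" and \<psi> :: "'i \<Rightarrow> 'j \<Rightarrow> real"
  assumes tree: "is_tree E"
    and supp: "\<And>i j. (i, j) \<notin> E \<Longrightarrow> \<psi> i j = 0"
    and rows: "\<And>i. (\<Sum>j\<in>UNIV. \<psi> i j) = 0"
    and cols: "\<And>j. (\<Sum>i\<in>UNIV. \<psi> i j) = 0"
  shows "\<psi> i0 j0 = 0"
proof (cases "(i0, j0) \<in> E")
  case False then show ?thesis using supp by auto
next
  case True
  define e where "e = (i0, j0)"
  define C where "C = {v. (adj (E - {e}))\<^sup>*\<^sup>* (Inl i0) v}"
  define CI where "CI = {i. Inl i \<in> C}"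
  define CJ where "CJ = {j. Inr j \<in> C}"
  have i0: "i0 \<in> CI" by (simp add: CI_def C_def)
  have j0: "j0 \<notin> CJ" using tree True unfolding is_tree_def CJ_def C_def e_def by force
  have k1: "j \<in> CJ" if "i \<in> CI" "(i, j) \<in> E" "(i, j) \<noteq> e" for i j
  proof -
    have "adj (E - {e}) (Inl i) (Inr j)" using that unfolding adj_def by blast
    then show ?thesis using that unfolding CI_def CJ_def C_def by (auto intro: rtranclp.rtrancl_into_rtrancl)
  qed
  have k2: "i \<in> CI" if "j \<in> CJ" "(i, j) \<in> E" "(i, j) \<noteq> e" for i j
  proof -
    have "adj (E - {e}) (Inr j) (Inl i)" using that unfolding adj_def by blast
    then show ?thesis using that unfolding CI_def CJ_def C_def by (auto intro: rtranclp.rtrancl_into_rtrancl)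
  qed
  have z1: "\<psi> i j = (if (i, j) = e then \<psi> i0 j0 else 0)" if "i \<in> CI" "j \<in> - CJ" for i j
    using k1[of i j] supp[of i j] that e_def by auto
  have z2: "\<psi> i j = 0" if "i \<in> - CI" "j \<in> CJ" for i j
    using k2[of j i] supp[of i j] that e_def i0 by auto
  have s1: "(\<Sum>i\<in>CI. \<Sum>j\<in>-CJ. \<psi> i j) = \<psi> i0 j0"
  proof -
    have "(\<Sum>i\<in>CI. \<Sum>j\<in>-CJ. \<psi> i j) = (\<Sum>i\<in>CI. if i = i0 then (\<Sum>j\<in>-CJ. if j = j0 then \<psi> i0 j0 else 0) else 0)"
      by (intro sum.cong refl) (use z1 e_def in auto)
    also have "\<dots> = \<psi> i0 j0" using i0 j0
      by (simp add: sum.delta)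
    finally show ?thesis .
  qed
  have s2: "(\<Sum>j\<in>CJ. \<Sum>i\<in>-CI. \<psi> i j) = 0"
    by (intro sum.neutral ballI) (use z2 in auto)
  have "0 = (\<Sum>i\<in>CI. \<Sum>j\<in>UNIV. \<psi> i j) - (\<Sum>j\<in>CJ. \<Sum>i\<in>UNIV. \<psi> i j)"
    using rows cols by simp
  also have "(\<Sum>i\<in>CI. \<Sum>j\<in>UNIV. \<psi> i j) = (\<Sum>i\<in>CI. \<Sum>j\<in>CJ. \<psi> i j) + (\<Sum>i\<in>CI. \<Sum>j\<in>-CJ. \<psi> i j)"
    by (subst sum.distrib[symmetric]) (intro sum.cong refl; simp add: split_UNIV)
  also have "(\<Sum>j\<in>CJ. \<Sum>i\<in>UNIV. \<psi> i j) = (\<Sum>j\<in>CJ. \<Sum>i\<in>CI. \<psi> i j) + (\<Sum>j\<in>CJ. \<Sum>i\<in>-CI. \<psi> i j)"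
    by (subst sum.distrib[symmetric]) (intro sum.cong refl; simp add: split_UNIV)
  also have "(\<Sum>i\<in>CI. \<Sum>j\<in>CJ. \<psi> i j) = (\<Sum>j\<in>CJ. \<Sum>i\<in>CI. \<psi> i j)" by (rule sum.swap)
  finally show ?thesis using s1 s2 by simp
qed

lemma tree_connected_const:
  fixes E :: "('i::finite \<times> 'j::finite) set" and h :: "'i + 'j \<Rightarrow> real"
  assumes tree: "is_tree E" and step: "\<And>v w. adj E v w \<Longrightarrow> h v = h w"
  shows "h v = h w"
proof -
  have "(adj E)\<^sup>*\<^sup>* v w" using tree unfolding is_tree_def by blast
  then show ?thesis by (induction rule: rtranclp_induct) (use step in auto)
qed

lemma G_exists:
  fixes E :: "('i::finite \<times> 'j::finite) set"
  assumes tree: "is_tree E" and eq: "esum \<alpha> = esum \<beta>"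
  shows "\<exists>\<psi>. Gp E \<alpha> \<beta> \<psi>"
proof -
  define mk :: "real^('i\<times>'j) \<Rightarrow> 'i \<Rightarrow> 'j \<Rightarrow> real" where
    "mk \<psi> i j = (if (i, j) \<in> E then \<psi> $ (i, j) else 0)" for \<psi> i j
  define Lm :: "real^('i\<times>'j) \<Rightarrow> (real^'i) \<times> (real^'j)" where
    "Lm \<psi> = ((\<chi> i. \<Sum>j\<in>UNIV. mk \<psi> i j), (\<chi> j. \<Sum>i\<in>UNIV. mk \<psi> i j))" for \<psi>
  have lin: "linear Lm"
    by (rule linearI) (auto simp: Lm_def mk_def vec_eq_iff sum.distrib[symmetric] sum_distrib_left intro!: sum.cong)
  have spanR: "span (range Lm) = range Lm"
    using span_linear_image[OF lin, of UNIV] by simp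
  obtain p z where p: "p \<in> span (range Lm)" and z: "\<And>w. w \<in> span (range Lm) \<Longrightarrow> orthogonal z w"
    and yz: "(\<alpha>, \<beta>) = p + z"
    using orthogonal_subspace_decomp_exists[of "range Lm" "(\<alpha>, \<beta>)"] by blast
  obtain \<psi> where p\<psi>: "p = Lm \<psi>" using p spanR by auto
  obtain a b where zab: "z = (a, b)" by (cases z)
  have edge: "a $ i + b $ j = 0" if "(i, j) \<in> E" for i j
  proof -
    have mk1: "mk (axis (i, j) 1) i' j' = (if i' = i then (if j' = j then 1 else 0) else 0)" for i' j'
      using that by (auto simp: mk_def axis_def)
    have mk2: "mk (axis (i, j) 1) i' j' = (if j' = j then (if i' = i then 1 else 0) else 0)" for i' j'
      using that by (auto simp: mk_def axis_def)
    have "Lm (axis (i, j) 1) = (axis i 1, axis j 1)"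
      unfolding Lm_def mk1 by (simp add: vec_eq_iff axis_def sum.delta)
    then have "orthogonal z (axis i 1, axis j 1)" using z[of "Lm (axis (i, j) 1)"] spanR by (metis rangeI)
    then show ?thesis by (simp add: zab orthogonal_def inner_axis)
  qed
  define h where "h v = (case v of Inl i \<Rightarrow> a $ i | Inr j \<Rightarrow> - b $ j)" for v
  have hstep: "h v = h w" if "adj E v w" for v w
    using that edge unfolding adj_def h_def by (auto; metis add.commute add_eq_0_iff)
  have hc: "h v = h w" for v w by (rule tree_connected_const[OF tree]) (rule hstep)
  obtain i1 :: 'i where True by blast
  define c where "c = h (Inl i1)"
  have ac: "a $ i = c" for i using hc[of "Inl i" "Inl i1"] by (simp add: c_def h_def)
  have bc: "b $ j = - c" for j using hc[of "Inr j" "Inl i1"] by (simp add: c_def h_def)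
  have pH: "esum (fst p) = esum (snd p)"
    unfolding p\<psi> Lm_def esum_def by (simp add: sum.swap[of _ "UNIV::'i set"])
  have "esum a = esum b"
  proof -
    have "a = \<alpha> - fst p" "b = \<beta> - snd p" using yz zab by (auto simp: prod_eq_iff)
    then show ?thesis using pH eq by (simp add: esum_diff)
  qed
  then have "real CARD('i) * c = - (real CARD('j) * c)"
    by (simp add: esum_def ac bc)
  then have "(real CARD('i) + real CARD('j)) * c = 0" by (simp add: algebra_simps)
  moreover have "real CARD('i) + real CARD('j) > 0" by (simp add: add_pos_pos)
  ultimately have c0: "c = 0" by simp
  have "z = 0" using ac bc c0 by (simp add: zab vec_eq_iff zero_prod_def)
  then have "(\<alpha>, \<beta>) = Lm \<psi>" using yz p\<psi> by simp
  then have "Gp E \<alpha> \<beta> (mk \<psi>)"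
    unfolding Gp_def by (auto simp: Lm_def mk_def vec_eq_iff)
  then show ?thesis by blast
qed

lemma Gp_unique:
  assumes tree: "is_tree E" and "Gp E \<alpha> \<beta> \<psi>1" "Gp E \<alpha> \<beta> \<psi>2"
  shows "\<psi>1 = \<psi>2"
proof -
  have "(\<lambda>i j. \<psi>1 i j - \<psi>2 i j) i j = 0" for i j
    by (rule cut_zero[OF tree]) (use assms in \<open>auto simp: Gp_def sum_subtractf\<close>)
  then show ?thesis by (auto simp: fun_eq_iff)
qed

lemma Gp_esum: "Gp E \<alpha> \<beta> \<psi> \<Longrightarrow> esum \<alpha> = esum \<beta>"
  unfolding Gp_def esum_def by (metis (no_types, lifting) sum.cong sum.swap)

lemma G_spec:
  assumes tree: "is_tree E" and eq: "esum \<alpha> = esum \<beta>"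
  shows "Gp E \<alpha> \<beta> (G E \<alpha> \<beta>)"
proof -
  have "\<exists>!\<psi>. Gp E \<alpha> \<beta> \<psi>" using G_exists[OF tree eq] Gp_unique[OF tree] by blast
  then have "Gp E \<alpha> \<beta> (THE \<psi>. Gp E \<alpha> \<beta> \<psi>)" by (rule theI')
  then show ?thesis unfolding G_def Gp_def by simp
qed

lemma G_eq: "is_tree E \<Longrightarrow> Gp E \<alpha> \<beta> \<psi> \<Longrightarrow> G E \<alpha> \<beta> = \<psi>"
  using G_spec Gp_unique Gp_esum by metis

lemma Gp_add: "Gp E a1 b1 p1 \<Longrightarrow> Gp E a2 b2 p2 \<Longrightarrow> Gp E (a1 + a2) (b1 + b2) (\<lambda>i j. p1 i j + p2 i j)"
  unfolding Gp_def by (simp add: sum.distrib)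

lemma Gp_scale: "Gp E a1 b1 p1 \<Longrightarrow> Gp E (c *\<^sub>R a1) (c *\<^sub>R b1) (\<lambda>i j. c * p1 i j)"
  unfolding Gp_def by (simp add: sum_distrib_left[symmetric])

definition GL :: "('i::finite \<times> 'j::finite) set \<Rightarrow> real^'i \<Rightarrow> real^'j \<Rightarrow> ('i \<Rightarrow> 'j \<Rightarrow> real)" where
  "GL E \<alpha> \<beta> = G E (\<alpha> - (esum \<alpha> - esum \<beta>) *\<^sub>R axis undefined 1) \<beta>"

lemma GL_eq: "esum \<alpha> = esum \<beta> \<Longrightarrow> GL E \<alpha> \<beta> = G E \<alpha> \<beta>"
  by (simp add: GL_def)

lemma GL_spec: "is_tree E \<Longrightarrow> Gp E (\<alpha> - (esum \<alpha> - esum \<beta>) *\<^sub>R axis undefined 1) \<beta> (GL E \<alpha> \<beta>)"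
  unfolding GL_def by (rule G_spec) (auto simp: esum_diff esum_scale esum_axis)

lemma GL_linear:
  assumes tree: "is_tree E"
  shows "linear (\<lambda>z. GL E (fst z) (snd z) i j)"
proof (rule linearI)
  fix x y :: "(real^'a) \<times> (real^'b)"
  have "Gp E (fst (x + y) - (esum (fst (x + y)) - esum (snd (x + y))) *\<^sub>R axis undefined 1) (snd (x + y))
          (\<lambda>i j. GL E (fst x) (snd x) i j + GL E (fst y) (snd y) i j)"
    using Gp_add[OF GL_spec[OF tree, of "fst x" "snd x"] GL_spec[OF tree, of "fst y" "snd y"]]
    by (simp add: esum_add algebra_simps)
  from G_eq[OF tree this] show "GL E (fst (x + y)) (snd (x + y)) i j = GL E (fst x) (snd x) i j + GL E (fst y) (snd y) i j"
    unfolding GL_def by simp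
next
  fix c :: real and x :: "(real^'a) \<times> (real^'b)"
  have "Gp E (fst (c *\<^sub>R x) - (esum (fst (c *\<^sub>R x)) - esum (snd (c *\<^sub>R x))) *\<^sub>R axis undefined 1) (snd (c *\<^sub>R x))
          (\<lambda>i j. c * GL E (fst x) (snd x) i j)"
    using Gp_scale[OF GL_spec[OF tree, of "fst x" "snd x"], of c]
    by (simp add: esum_scale algebra_simps)
  from G_eq[OF tree this] show "GL E (fst (c *\<^sub>R x)) (snd (c *\<^sub>R x)) i j = c *\<^sub>R GL E (fst x) (snd x) i j"
    unfolding GL_def by simp
qed

lemma GL_add: assumes "is_tree E" shows "GL E (a1 + a2) (b1 + b2) i j = GL E a1 b1 i j + GL E a2 b2 i j"
  using linear_add[OF GL_linear[OF assms, of i j], of "(a1, b1)" "(a2, b2)"] by simp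

lemma GL_scale: assumes "is_tree E" shows "GL E (c *\<^sub>R a1) (c *\<^sub>R b1) i j = c * GL E a1 b1 i j"
  using linear_scale[OF GL_linear[OF assms, of i j], of c "(a1, b1)"] by simp

definition bdr :: "('i::finite \<times> 'j::finite) set \<Rightarrow> ('i \<Rightarrow> 'j \<Rightarrow> real) \<Rightarrow> ('i \<Rightarrow> real) \<Rightarrow> ('i \<Rightarrow> real)
    \<Rightarrow> real^'i \<Rightarrow> ((real^'i) \<times> (real^'j)) \<Rightarrow> real^'i" where
  "bdr E \<mu> \<theta> l p U = (\<chi> i. - (\<Sum>j\<in>UNIV. \<mu> i j * GL E (p - posp (esum p) *\<^sub>R fst U) (- (negp (esum p) *\<^sub>R snd U)) i j)
                           - \<theta> i * posp (esum p) * (fst U $ i) + l i)"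

lemma drift_bdr:
  assumes "esum (fst U) = 1" "esum (snd U) = 1"
  shows "drift E \<mu> \<theta> l p U = bdr E \<mu> \<theta> l p U"
proof -
  have "esum (p - posp (esum p) *\<^sub>R fst U) = esum (- (negp (esum p) *\<^sub>R snd U))"
    using assms by (simp add: esum_diff esum_scale esum_uminus posp_def negp_def)
  then show ?thesis unfolding drift_def bdr_def Ghat_def by (simp add: GL_eq)
qed

lemma UU_esum: "U \<in> UU \<Longrightarrow> esum (fst U) = 1 \<and> esum (snd U) = 1"
  by (auto simp: UU_def)

lemma UU_comp: "U \<in> UU \<Longrightarrow> 0 \<le> fst U $ i \<and> fst U $ i \<le> 1"
proof -
  assume U: "U \<in> UU"
  then have nn: "\<forall>i. 0 \<le> fst U $ i" and s: "(\<Sum>i\<in>UNIV. fst U $ i) = 1" by (auto simp: UU_def esum_def)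
  have "fst U $ i \<le> (\<Sum>i\<in>UNIV. fst U $ i)" by (rule member_le_sum) (use nn in auto)
  then show ?thesis using nn s by auto
qed

lemma UU_norm: "U \<in> UU \<Longrightarrow> norm (fst U) \<le> 1 \<and> norm (snd U) \<le> 1"
proof -
  assume U: "U \<in> UU"
  then have a: "\<forall>i. 0 \<le> fst U $ i" "(\<Sum>i\<in>UNIV. fst U $ i) = 1"
    and b: "\<forall>j. 0 \<le> snd U $ j" "(\<Sum>j\<in>UNIV. snd U $ j) = 1" by (auto simp: UU_def esum_def)
  have "norm (fst U) \<le> (\<Sum>i\<in>UNIV. \<bar>fst U $ i\<bar>)" by (rule norm_le_l1_cart)
  also have "\<dots> = 1" using a by simp
  moreover have "norm (snd U) \<le> (\<Sum>j\<in>UNIV. \<bar>snd U $ j\<bar>)" by (rule norm_le_l1_cart)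
  moreover have "(\<Sum>j\<in>UNIV. \<bar>snd U $ j\<bar>) = 1" using b by simp
  ultimately show ?thesis by simp
qed

lemma esum_bound: "\<bar>esum (x::real^'n::finite)\<bar> \<le> real CARD('n) * norm x"
proof -
  have "\<bar>esum x\<bar> \<le> (\<Sum>i\<in>UNIV. \<bar>x $ i\<bar>)" unfolding esum_def by (rule sum_abs)
  also have "\<dots> \<le> (\<Sum>i\<in>(UNIV::'n set). norm x)" by (intro sum_mono component_le_norm_cart)
  finally show ?thesis by simp
qed

lemma posp_lip: "\<bar>posp a - posp b\<bar> \<le> \<bar>a - b\<bar>" by (simp add: posp_def)
lemma negp_lip: "\<bar>negp a - negp b\<bar> \<le> \<bar>a - b\<bar>" by (simp add: negp_def)

lemma GL_cont:
  assumes tree: "is_tree E" and f: "continuous_on S f" and g: "continuous_on S g"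
  shows "continuous_on S (\<lambda>w. GL E (f w) (g w) i j)"
proof -
  have c1: "continuous_on UNIV (\<lambda>z. GL E (fst z) (snd z) i j)"
    by (rule linear_continuous_on) (rule linear_conv_bounded_linear[THEN iffD1, OF GL_linear[OF tree]])
  have "continuous_on S (\<lambda>w. (\<lambda>z. GL E (fst z) (snd z) i j) ((\<lambda>w. (f w, g w)) w))"
    by (rule continuous_on_compose2[OF c1 continuous_on_Pair[OF f g]]) auto
  then show ?thesis by simp
qed

lemma esum_cont[continuous_intros]: "continuous_on S f \<Longrightarrow> continuous_on S (\<lambda>w. esum (f w))"
  unfolding esum_def by (intro continuous_intros)

lemma posp_cont[continuous_intros]: "continuous_on S f \<Longrightarrow> continuous_on S (\<lambda>w. posp (f w))"
  unfolding posp_def by (intro continuous_intros)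
lemma negp_cont[continuous_intros]: "continuous_on S f \<Longrightarrow> continuous_on S (\<lambda>w. negp (f w))"
  unfolding negp_def by (intro continuous_intros)

lemma bdr_cont:
  assumes tree: "is_tree E"
  shows "continuous_on UNIV (\<lambda>w. bdr E \<mu> \<theta> l (fst w) (snd w))"
  unfolding bdr_def
  by (intro continuous_intros GL_cont[OF tree])

lemma bdr_lip:
  assumes tree: "is_tree E" and th: "\<And>i. \<theta> i \<ge> 0"
  obtains Lc where "Lc \<ge> 0" "\<And>p q U. U \<in> UU \<Longrightarrow> norm (bdr E \<mu> \<theta> l p U - bdr E \<mu> \<theta> l q U) \<le> Lc * norm (p - q)"
proof -
  define Glin :: "(real^'a) \<times> (real^'b) \<Rightarrow> real^'a" where
    "Glin z = (\<chi> i. \<Sum>j\<in>UNIV. \<mu> i j * GL E (fst z) (snd z) i j)" for z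
  have lin: "linear Glin"
  proof (rule linearI)
    fix x y show "Glin (x + y) = Glin x + Glin y"
      unfolding Glin_def
      by (simp add: vec_eq_iff GL_add[OF tree] distrib_left sum.distrib)
  next
    fix c :: real and x show "Glin (c *\<^sub>R x) = c *\<^sub>R Glin x"
      unfolding Glin_def
      by (simp add: vec_eq_iff GL_scale[OF tree] sum_distrib_left algebra_simps)
  qed
  obtain K where K: "K > 0" "\<And>z. norm (Glin z) \<le> norm z * K"
    using bounded_linear.pos_bounded[OF linear_conv_bounded_linear[THEN iffD1, OF lin]] by blast
  define N where "N = real CARD('a)"
  define Th where "Th = (\<Sum>i\<in>UNIV. \<theta> i)"
  have Th0: "Th \<ge> 0" unfolding Th_def using th by (simp add: sum_nonneg)
  have N0: "N \<ge> 0" by (simp add: N_def)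
  show ?thesis
  proof (rule that[of "K * (1 + 2 * N) + Th * N"])
    show "0 \<le> K * (1 + 2 * N) + Th * N" using K N0 Th0 by simp
  next
    fix p q :: "real^'a" and U :: "(real^'a) \<times> (real^'b)"
    assume U: "U \<in> UU"
    define d where "d = \<bar>esum p - esum q\<bar>"
    have d: "d \<le> N * norm (p - q)" using esum_bound[of "p - q"] by (simp add: d_def N_def esum_diff)
    define A where "A z = (z - posp (esum z) *\<^sub>R fst U, - (negp (esum z) *\<^sub>R snd U))" for z
    have eqb: "bdr E \<mu> \<theta> l z U = - Glin (A z) - (\<chi> i. \<theta> i * posp (esum z) * fst U $ i) + (\<chi> i. l i)" for z
      unfolding bdr_def Glin_def A_def by (simp add: vec_eq_iff)
    have "bdr E \<mu> \<theta> l p U - bdr E \<mu> \<theta> l q U = - Glin (A p - A q) - (\<chi> i. \<theta> i * (posp (esum p) - posp (esum q)) * fst U $ i)"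
      unfolding eqb linear_diff[OF lin] by (simp add: vec_eq_iff algebra_simps)
    also have "norm \<dots> \<le> norm (Glin (A p - A q)) + norm (\<chi> i. \<theta> i * (posp (esum p) - posp (esum q)) * fst U $ i)"
      by (rule order_trans[OF norm_triangle_ineq4]) simp
    also have "\<dots> \<le> K * (1 + 2 * N) * norm (p - q) + Th * N * norm (p - q)"
    proof (rule add_mono)
      have n1: "norm (fst (A p - A q)) \<le> norm (p - q) + d"
      proof -
        have "fst (A p - A q) = (p - q) - (posp (esum p) - posp (esum q)) *\<^sub>R fst U"
          by (simp add: A_def algebra_simps)
        then have "norm (fst (A p - A q)) \<le> norm (p - q) + \<bar>posp (esum p) - posp (esum q)\<bar> * norm (fst U)"
          by (metis norm_scaleR norm_triangle_ineq4)
        also have "\<dots> \<le> norm (p - q) + d * 1"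
          using UU_norm[OF U] posp_lip[of "esum p" "esum q"] unfolding d_def
          by (intro add_left_mono mult_mono) auto
        finally show ?thesis by simp
      qed
      have n2: "norm (snd (A p - A q)) \<le> d"
      proof -
        have "snd (A p - A q) = - ((negp (esum p) - negp (esum q)) *\<^sub>R snd U)"
          by (simp add: A_def algebra_simps)
        then have "norm (snd (A p - A q)) = \<bar>negp (esum p) - negp (esum q)\<bar> * norm (snd U)"
          by simp
        also have "\<dots> \<le> d * 1"
          using UU_norm[OF U] negp_lip[of "esum p" "esum q"] unfolding d_def
          by (intro mult_mono) auto
        finally show ?thesis by simp
      qed
      have "norm (A p - A q) \<le> norm (fst (A p - A q)) + norm (snd (A p - A q))"
        by (metis norm_Pair_le prod.collapse)
      also have "\<dots> \<le> (1 + 2 * N) * norm (p - q)" using n1 n2 d by (simp add: algebra_simps)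
      finally have "norm (A p - A q) \<le> (1 + 2 * N) * norm (p - q)" .
      then have "norm (A p - A q) * K \<le> (1 + 2 * N) * norm (p - q) * K" using K by (intro mult_right_mono) auto
      then show "norm (Glin (A p - A q)) \<le> K * (1 + 2 * N) * norm (p - q)"
        using K(2)[of "A p - A q"] by (simp add: algebra_simps)
    next
      let ?e = "posp (esum p) - posp (esum q)"
      have "norm (\<chi> i. \<theta> i * ?e * fst U $ i) \<le> (\<Sum>i\<in>UNIV. \<bar>(\<chi> i. \<theta> i * ?e * fst U $ i) $ i\<bar>)"
        by (rule norm_le_l1_cart)
      also have "\<dots> \<le> (\<Sum>i\<in>UNIV. \<theta> i * d)"
      proof (rule sum_mono)
        fix i
        have "\<bar>\<theta> i * ?e * fst U $ i\<bar> = \<theta> i * \<bar>?e\<bar> * \<bar>fst U $ i\<bar>" using th[of i] by (simp add: abs_mult)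
        also have "\<dots> \<le> \<theta> i * d * 1"
          using UU_comp[OF U, of i] th[of i] posp_lip[of "esum p" "esum q"] unfolding d_def
          by (intro mult_mono mult_left_mono) auto
        finally show "\<bar>(\<chi> i. \<theta> i * ?e * fst U $ i) $ i\<bar> \<le> \<theta> i * d" by simp
      qed
      also have "\<dots> = Th * d" by (simp add: Th_def sum_distrib_right)
      also have "\<dots> \<le> Th * (N * norm (p - q))" using d Th0 by (rule mult_left_mono)
      finally show "norm (\<chi> i. \<theta> i * ?e * fst U $ i) \<le> Th * N * norm (p - q)" by (simp add: algebra_simps)
    qed
    finally show "norm (bdr E \<mu> \<theta> l p U - bdr E \<mu> \<theta> l q U) \<le> (K * (1 + 2 * N) + Th * N) * norm (p - q)"
      by (simp add: algebra_simps)
  qed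
qed

lemma bdr_zero:
  assumes tree: "is_tree E"
  shows "bdr E \<mu> \<theta> l 0 U = (\<chi> i. l i)"
proof -
  have "GL E (fst (0::(real^'a)\<times>(real^'b))) (snd (0::(real^'a)\<times>(real^'b))) i j = 0" for i j
    using linear_0[OF GL_linear[OF tree, of i j]] by simp
  then show ?thesis unfolding bdr_def by (simp add: esum_zero posp_def negp_def)
qed



lemma filt_measurable_mono:
  assumes filt: "filtration_on M F" and st: "0 \<le> s" "s \<le> t"
    and f: "f \<in> borel_measurable (F s)"
  shows "f \<in> borel_measurable (F t)"
proof -
  have "sets (F s) \<subseteq> sets (F t)" "space (F s) = space (F t)"
    using filt st unfolding filtration_on_def by auto
  then show ?thesis using measurable_mono[of borel borel "F s" "F t"] f by auto
qed

lemma space_F: "filtration_on M F \<Longrightarrow> 0 \<le> t \<Longrightarrow> space (F t) = space M"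
  unfolding filtration_on_def by auto

lemma cont_adapted_prog:
  fixes X :: "real \<Rightarrow> 'a \<Rightarrow> real^'n::finite"
  assumes filt: "filtration_on M F" and ad: "adapted F X"
    and cont: "\<And>\<omega>. \<omega> \<in> space M \<Longrightarrow> continuous_on {0..} (\<lambda>t. X t \<omega>)"
  shows "prog_measurable F X"
  unfolding prog_measurable_def
proof (intro allI impI)
  fix T :: real assume T: "0 \<le> T"
  let ?N = "restrict_space lborel {0..T} \<Otimes>\<^sub>M F T"
  define c where "c n (k::int) = min T (max 0 (real_of_int k / real (Suc n)))" for n k
  define Xn where "Xn n = (\<lambda>(s, \<omega>). X (c n \<lfloor>real (Suc n) * s\<rfloor>) \<omega>)" for n
  have meas: "Xn n \<in> borel_measurable ?N" for n
  proof -
    have "(\<lambda>x. (\<lambda>k x. X (c n k) (snd x)) (\<lfloor>real (Suc n) * fst x\<rfloor>) x) \<in> borel_measurable ?N"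
    proof (rule measurable_compose_countable'[where f="\<lambda>k x. X (c n k) (snd x)" and g="\<lambda>x. \<lfloor>real (Suc n) * fst x\<rfloor>" and I=UNIV])
      fix k :: int assume "k \<in> (UNIV::int set)"
      have "c n k \<ge> 0" "c n k \<le> T" using T by (auto simp: c_def)
      then have "X (c n k) \<in> borel_measurable (F T)"
        using ad filt_measurable_mono[OF filt] unfolding adapted_def by blast
      then show "(\<lambda>x. X (c n k) (snd x)) \<in> borel_measurable ?N"
        by (rule measurable_compose[OF measurable_snd])
    next
      have "(\<lambda>x. x) \<in> measurable (restrict_space lborel {0..T}) (borel :: real measure)"
        by (rule measurable_restrict_space1) simp
      then have "fst \<in> measurable ?N (borel :: real measure)"
        using measurable_compose[OF measurable_fst] by blast
      then have "(\<lambda>x. real (Suc n) * fst x) \<in> measurable ?N (borel :: real measure)"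
        by measurable
      then show "(\<lambda>x. \<lfloor>real (Suc n) * fst x\<rfloor>) \<in> measurable ?N (count_space UNIV)"
        using measurable_compose[OF _ measurable_real_floor] by blast
    qed auto
    then show ?thesis unfolding Xn_def by (simp add: case_prod_beta')
  qed
  show "(\<lambda>(s, \<omega>). X s \<omega>) \<in> borel_measurable ?N"
  proof (rule borel_measurable_LIMSEQ_metric[OF meas])
    fix x assume x: "x \<in> space ?N"
    obtain s \<omega> where xs: "x = (s, \<omega>)" by (cases x)
    have s: "0 \<le> s" "s \<le> T" and \<omega>: "\<omega> \<in> space M"
      using x space_F[OF filt T] by (auto simp: xs space_pair_measure)
    define a where "a n = real_of_int \<lfloor>real (Suc n) * s\<rfloor> / real (Suc n)" for n
    have a_le: "a n \<le> s" for n
    proof -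
      have "real_of_int \<lfloor>real (Suc n) * s\<rfloor> \<le> real (Suc n) * s" by simp
      then show ?thesis unfolding a_def by (simp add: divide_le_eq mult.commute)
    qed
    have a_ge: "s - 1 / real (Suc n) \<le> a n" for n
    proof -
      have "real (Suc n) * s - 1 \<le> real_of_int \<lfloor>real (Suc n) * s\<rfloor>" by linarith
      then have "(real (Suc n) * s - 1) / real (Suc n) \<le> real_of_int \<lfloor>real (Suc n) * s\<rfloor> / real (Suc n)"
        by (intro divide_right_mono) auto
      moreover have "(real (Suc n) * s - 1) / real (Suc n) = s - 1 / real (Suc n)"
        by (simp add: field_simps)
      ultimately show ?thesis unfolding a_def by simp
    qed
    have a0: "0 \<le> a n" for n unfolding a_def using s by simp
    have ca: "c n \<lfloor>real (Suc n) * s\<rfloor> = a n" for n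
      using a0[of n] a_le[of n] s unfolding c_def a_def by simp
    have lim1: "(\<lambda>n. s - 1 / real (Suc n)) \<longlonglongrightarrow> s"
      using tendsto_diff[OF tendsto_const LIMSEQ_inverse_real_of_nat] by (simp add: inverse_eq_divide)
    have alim: "a \<longlonglongrightarrow> s"
      by (rule tendsto_sandwich[OF _ _ lim1 tendsto_const]) (use a_le a_ge in auto)
    have "(\<lambda>n. X (a n) \<omega>) \<longlonglongrightarrow> X s \<omega>"
      by (rule continuous_on_tendsto_compose[OF cont[OF \<omega>] alim]) (use s a0 in auto)
    then show "(\<lambda>n. Xn n x) \<longlonglongrightarrow> (\<lambda>(s, \<omega>). X s \<omega>) x"
      unfolding xs Xn_def by (simp only: case_prod_conv ca)
  qed
qed



lemma set_norm_bound:
  fixes h :: "real \<Rightarrow> 'b::{banach,second_countable_topology}"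
  assumes A: "A \<in> sets lborel" "emeasure lborel A < \<infinity>"
    and int: "set_integrable lborel A h" and bnd: "\<And>s. s \<in> A \<Longrightarrow> norm (h s) \<le> B"
  shows "norm (LINT s:A|lborel. h s) \<le> B * measure lborel A"
proof -
  have ic: "set_integrable lborel A (\<lambda>_. B)"
    unfolding set_integrable_def using integrable_real_indicator[OF A] by (simp add: integrable_mult_left)
  have "norm (LINT s:A|lborel. h s) \<le> (LINT s:A|lborel. norm (h s))"
    by (rule set_integral_norm_bound[OF int])
  also have "\<dots> \<le> (LINT s:A|lborel. B)"
    by (rule set_integral_mono[OF set_integrable_norm[OF int] ic bnd])
  also have "\<dots> = B * measure lborel A"
    using set_integral_const[of A lborel B] A by simp
  finally show ?thesis .
qed

lemma int_poly:
  assumes t: "0 \<le> t"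
  shows "(LINT s:{0..t}|lborel. s ^ n) = t ^ Suc n / real (Suc n)"
proof -
  have "integral\<^sup>L lborel (\<lambda>x. indicator {0 .. t} x *\<^sub>R x ^ n) = t ^ Suc n / real (Suc n) - 0 ^ Suc n / real (Suc n)"
  proof (rule integral_FTC_atLeastAtMost[OF t])
    fix x :: real
    have "((\<lambda>x. x ^ Suc n / real (Suc n)) has_real_derivative real (Suc n) * (x ^ (Suc n - Suc 0)) / real (Suc n)) (at x within {0..t})"
      by (rule DERIV_cdivide[OF DERIV_pow])
    then have "((\<lambda>x. x ^ Suc n / real (Suc n)) has_real_derivative x ^ n) (at x within {0..t})"
      by simp
    then show "((\<lambda>x. x ^ Suc n / real (Suc n)) has_vector_derivative x ^ n) (at x within {0..t})"
      by (simp add: has_real_derivative_iff_has_vector_derivative)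
  qed (intro continuous_intros)
  then show ?thesis by (simp add: set_lebesgue_integral_def)
qed

lemma iter_step:
  fixes g :: "real \<Rightarrow> 'b::{banach,second_countable_topology}"
  assumes t: "0 \<le> t" and Lc: "0 \<le> Lc" and C: "0 \<le> C"
    and int: "set_integrable lborel {0..t} g"
    and bnd: "\<And>s. s \<in> {0..t} \<Longrightarrow> norm (g s) \<le> Lc * (C * (Lc * s) ^ n / fact n)"
  shows "norm (LINT s:{0..t}|lborel. g s) \<le> C * (Lc * t) ^ Suc n / fact (Suc n)"
proof -
  define K where "K = Lc * C * Lc ^ n / fact n"
  have bnd': "norm (g s) \<le> K * s ^ n" if "s \<in> {0..t}" for s
    using bnd[OF that] by (simp add: K_def power_mult_distrib)
  have ic: "set_integrable lborel {0..t} (\<lambda>s. K * s ^ n)"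
    by (rule borel_integrable_atLeastAtMost') (intro continuous_intros)
  have "norm (LINT s:{0..t}|lborel. g s) \<le> (LINT s:{0..t}|lborel. norm (g s))"
    by (rule set_integral_norm_bound[OF int])
  also have "\<dots> \<le> (LINT s:{0..t}|lborel. K * s ^ n)"
    by (rule set_integral_mono[OF set_integrable_norm[OF int] ic bnd'])
  also have "\<dots> = K * (t ^ Suc n / real (Suc n))"
    using int_poly[OF t, of n] by simp
  also have "\<dots> = C * (Lc * t) ^ Suc n / fact (Suc n)"
    unfolding K_def by (simp add: power_mult_distrib field_simps)
  finally show ?thesis .
qed

lemma int_diff_bound:
  fixes g :: "real \<Rightarrow> 'b::{banach,second_countable_topology}"
  assumes t: "0 \<le> t1" "t1 \<le> t2" and int: "set_integrable lborel {0..t2} g"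
    and bnd: "\<And>s. s \<in> {0..t2} \<Longrightarrow> norm (g s) \<le> B"
  shows "norm ((LINT s:{0..t2}|lborel. g s) - (LINT s:{0..t1}|lborel. g s)) \<le> B * (t2 - t1)"
proof -
  have int1: "set_integrable lborel {0..t1} g" by (rule set_integrable_subset[OF int]) (use t in auto)
  have int3: "set_integrable lborel {t1<..t2} g" by (rule set_integrable_subset[OF int]) (use t in auto)
  have "(LINT s:{0..t2}|lborel. g s) - (LINT s:{0..t1}|lborel. g s) = (LINT s:{t1<..t2}|lborel. g s)"
  proof -
    have "(\<integral>x. indicator {0..t2} x *\<^sub>R g x \<partial>lborel) - (\<integral>x. indicator {0..t1} x *\<^sub>R g x \<partial>lborel)
        = (\<integral>x. indicator {0..t2} x *\<^sub>R g x - indicator {0..t1} x *\<^sub>R g x \<partial>lborel)"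
      by (rule Bochner_Integration.integral_diff[symmetric]) (use int int1 in \<open>auto simp: set_integrable_def\<close>)
    also have "\<dots> = (\<integral>x. indicator {t1<..t2} x *\<^sub>R g x \<partial>lborel)"
      by (rule Bochner_Integration.integral_cong[OF refl]) (use t in \<open>auto split: split_indicator\<close>)
    finally show ?thesis by (simp add: set_lebesgue_integral_def)
  qed
  also have "norm \<dots> \<le> B * measure lborel {t1<..t2}"
    by (rule set_norm_bound[OF _ _ int3]) (use bnd t in auto)
  also have "\<dots> = B * (t2 - t1)" using t by simp
  finally show ?thesis .
qed

lemma indef_cont:
  fixes g :: "real \<Rightarrow> 'b::{banach,second_countable_topology}"
  assumes int: "\<And>T. 0 \<le> T \<Longrightarrow> set_integrable lborel {0..T} g"
    and bnd: "\<And>T. 0 \<le> T \<Longrightarrow> \<exists>B. \<forall>s\<in>{0..T}. norm (g s) \<le> B"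
  shows "continuous_on {0..} (\<lambda>t. LINT s:{0..t}|lborel. g s)"
  unfolding continuous_on_iff
proof (intro ballI allI impI)
  fix t0 :: real and e :: real assume t0: "t0 \<in> {0..}" and e: "0 < e"
  obtain B0 where B0: "\<forall>s\<in>{0..t0+1}. norm (g s) \<le> B0" using bnd[of "t0 + 1"] t0 by auto
  define B where "B = max B0 1"
  have B: "B > 0" "\<forall>s\<in>{0..t0+1}. norm (g s) \<le> B" using B0 by (auto simp: B_def intro: order_trans)
  define d where "d = min 1 (e / (2 * B))"
  have d: "d > 0" using B e by (simp add: d_def)
  show "\<exists>d>0. \<forall>x'\<in>{0..}. dist x' t0 < d \<longrightarrow> dist (LINT s:{0..x'}|lborel. g s) (LINT s:{0..t0}|lborel. g s) < e"
  proof (intro exI[of _ d] conjI d ballI impI)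
    fix x' :: real assume x': "x' \<in> {0..}" "dist x' t0 < d"
    have xd: "\<bar>x' - t0\<bar> < d" using x' by (simp add: dist_real_def)
    have "B * \<bar>x' - t0\<bar> < e"
    proof -
      have "B * \<bar>x' - t0\<bar> \<le> B * (e / (2 * B))"
        using xd B by (intro mult_left_mono) (auto simp: d_def)
      also have "\<dots> < e" using B e by (simp add: field_simps)
      finally show ?thesis .
    qed
    moreover have "dist (LINT s:{0..x'}|lborel. g s) (LINT s:{0..t0}|lborel. g s) \<le> B * \<bar>x' - t0\<bar>"
    proof (cases "x' \<le> t0")
      case True
      have "norm ((LINT s:{0..t0}|lborel. g s) - (LINT s:{0..x'}|lborel. g s)) \<le> B * (t0 - x')"
        by (rule int_diff_bound[OF _ True int]) (use x' t0 B in auto)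
      then show ?thesis using True by (simp add: dist_norm norm_minus_commute)
    next
      case False
      have "x' \<le> t0 + 1" using xd d by (auto simp: d_def)
      have "norm ((LINT s:{0..x'}|lborel. g s) - (LINT s:{0..t0}|lborel. g s)) \<le> B * (x' - t0)"
        by (rule int_diff_bound) (use False x' t0 B \<open>x' \<le> t0 + 1\<close> int in auto)
      then show ?thesis using False by (simp add: dist_norm)
    qed
    ultimately show "dist (LINT s:{0..x'}|lborel. g s) (LINT s:{0..t0}|lborel. g s) < e" by simp
  qed
qed



lemma prog_adapted:
  assumes filt: "filtration_on M F" and pm: "prog_measurable F Z" and t: "0 \<le> t"
  shows "Z t \<in> borel_measurable (F t)"
proof -
  have m: "(\<lambda>(s, \<omega>). Z s \<omega>) \<in> borel_measurable (restrict_space lborel {0..t} \<Otimes>\<^sub>M F t)"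
    using pm t unfolding prog_measurable_def by auto
  have "t \<in> space (restrict_space lborel {0..t})" using t by simp
  from measurable_compose[OF measurable_Pair1'[OF this] m] show ?thesis by simp
qed

lemma prog_section:
  assumes filt: "filtration_on M F" and pm: "prog_measurable F Z" and t: "0 \<le> t" and \<omega>: "\<omega> \<in> space M"
  shows "(\<lambda>s. indicator {0..t} s *\<^sub>R (Z s \<omega> :: 'b::real_normed_vector)) \<in> borel_measurable lborel"
proof -
  have m: "(\<lambda>(s, \<omega>). Z s \<omega>) \<in> borel_measurable (restrict_space lborel {0..t} \<Otimes>\<^sub>M F t)"
    using pm t unfolding prog_measurable_def by auto
  have "\<omega> \<in> space (F t)" using space_F[OF filt t] \<omega> by simp
  from measurable_compose[OF measurable_Pair2'[OF this] m]
  have "(\<lambda>s. Z s \<omega>) \<in> borel_measurable (restrict_space lborel {0..t})" by simp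
  then show ?thesis by (subst (asm) borel_measurable_restrict_space_iff) auto
qed

lemma prog_integrable:
  fixes Z :: "real \<Rightarrow> 'a \<Rightarrow> 'b::{banach,second_countable_topology}"
  assumes filt: "filtration_on M F" and pm: "prog_measurable F Z" and t: "0 \<le> t" and \<omega>: "\<omega> \<in> space M"
    and bnd: "\<And>s. s \<in> {0..t} \<Longrightarrow> norm (Z s \<omega>) \<le> B"
  shows "set_integrable lborel {0..t} (\<lambda>s. Z s \<omega>)"
  unfolding set_integrable_def
  by (rule integrableI_bounded_set[where A="{0..t}" and B=B])
     (use prog_section[OF filt pm t \<omega>] bnd t in \<open>auto split: split_indicator simp: ennreal_less_top\<close>)

lemma prog_compose:
  fixes Z :: "real \<Rightarrow> 'a \<Rightarrow> 'b::{euclidean_space}" and U :: "real \<Rightarrow> 'a \<Rightarrow> 'c::{euclidean_space}"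
  assumes pZ: "prog_measurable F Z" and pU: "prog_measurable F U"
    and f: "continuous_on UNIV (\<lambda>w. f (fst w) (snd w) :: 'd::euclidean_space)"
  shows "prog_measurable F (\<lambda>s \<omega>. f (Z s \<omega>) (U s \<omega>))"
  unfolding prog_measurable_def
proof (intro allI impI)
  fix T :: real assume T: "0 \<le> T"
  let ?N = "restrict_space lborel {0..T} \<Otimes>\<^sub>M F T"
  have [measurable]: "(\<lambda>(s, \<omega>). Z s \<omega>) \<in> borel_measurable ?N" "(\<lambda>(s, \<omega>). U s \<omega>) \<in> borel_measurable ?N"
    using pZ pU T unfolding prog_measurable_def by auto
  have "(\<lambda>z. ((\<lambda>(s, \<omega>). Z s \<omega>) z, (\<lambda>(s, \<omega>). U s \<omega>) z)) \<in> borel_measurable ?N"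
    by (rule borel_measurable_Pair) measurable
  from measurable_compose[OF this borel_measurable_continuous_onI[OF f]]
  show "(\<lambda>(s, \<omega>). f (Z s \<omega>) (U s \<omega>)) \<in> borel_measurable ?N"
    by (simp add: case_prod_beta')
qed

lemma prog_add:
  fixes A B :: "real \<Rightarrow> 'a \<Rightarrow> 'b::{euclidean_space}"
  assumes "prog_measurable F A" "prog_measurable F B"
  shows "prog_measurable F (\<lambda>s \<omega>. A s \<omega> + B s \<omega>)"
proof -
  have c: "continuous_on UNIV (\<lambda>w::'b\<times>'b. fst w + snd w)" by (intro continuous_intros)
  show ?thesis using prog_compose[OF assms, of "\<lambda>a b. a + b"] c by simp
qed

lemma prog_integral:
  fixes g :: "real \<Rightarrow> 'a \<Rightarrow> 'b::{euclidean_space}"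
  assumes filt: "filtration_on M F" and pg: "prog_measurable F g"
  shows "prog_measurable F (\<lambda>t \<omega>. LINT s:{0..t}|lborel. g s \<omega>)"
  unfolding prog_measurable_def
proof (intro allI impI)
  fix T :: real assume T: "0 \<le> T"
  let ?R = "restrict_space lborel {0..T}"
  let ?N = "?R \<Otimes>\<^sub>M F T"
  define cl where "cl s = min T (max 0 s)" for s :: real
  have g[measurable]: "(\<lambda>(s, \<omega>). g s \<omega>) \<in> borel_measurable ?N"
    using pg T unfolding prog_measurable_def by auto
  have id1: "(\<lambda>x. x) \<in> measurable ?R (borel :: real measure)"
    by (rule measurable_restrict_space1) simp
  have ff: "(\<lambda>z. fst (fst z)) \<in> measurable (?N \<Otimes>\<^sub>M lborel) (borel :: real measure)"
  proof -
    have h1: "(\<lambda>z. fst z) \<in> measurable (?N \<Otimes>\<^sub>M lborel) ?N" by (rule measurable_fst)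
    have h2: "(\<lambda>z. fst z) \<in> measurable ?N ?R" by (rule measurable_fst)
    show ?thesis using measurable_compose[OF measurable_compose[OF h1 h2] id1] by simp
  qed
  have sn: "(\<lambda>z. snd z) \<in> measurable (?N \<Otimes>\<^sub>M lborel) (borel :: real measure)"
    using measurable_snd[of ?N lborel] by simp
  have clm: "(\<lambda>z. cl (snd z)) \<in> measurable (?N \<Otimes>\<^sub>M lborel) ?R"
  proof (subst measurable_restrict_space2_iff, intro conjI)
    show "(\<lambda>z. cl (snd z)) \<in> measurable (?N \<Otimes>\<^sub>M lborel) lborel"
      unfolding cl_def using sn by (simp add: measurable_lborel2) 
    show "(\<lambda>z. cl (snd z)) \<in> space (?N \<Otimes>\<^sub>M lborel) \<rightarrow> {0..T}"
      using T by (auto simp: cl_def)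
  qed
  have som: "(\<lambda>z. snd (fst z)) \<in> measurable (?N \<Otimes>\<^sub>M lborel) (F T)"
    by (rule measurable_compose[OF measurable_fst measurable_snd])
  have gm: "(\<lambda>z. g (cl (snd z)) (snd (fst z))) \<in> borel_measurable (?N \<Otimes>\<^sub>M lborel)"
    using measurable_compose[OF measurable_Pair[OF clm som] g] by simp
  have im: "(\<lambda>z. indicator {0..fst (fst z)} (snd z) :: real) \<in> borel_measurable (?N \<Otimes>\<^sub>M lborel)"
  proof -
    have "(\<lambda>z. indicator {0..fst (fst z)} (snd z) :: real) = (\<lambda>z. if 0 \<le> snd z \<and> snd z \<le> fst (fst z) then 1 else 0)"
      by (auto simp: fun_eq_iff split: split_indicator)
    also have "\<dots> \<in> borel_measurable (?N \<Otimes>\<^sub>M lborel)"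
      using ff sn by measurable
    finally show ?thesis .
  qed
  have int_m: "(\<lambda>x. \<integral>s. indicator {0..fst x} s *\<^sub>R g (cl s) (snd x) \<partial>lborel) \<in> borel_measurable ?N"
  proof (rule lborel.borel_measurable_lebesgue_integral)
    show "case_prod (\<lambda>x s. indicator {0..fst x} s *\<^sub>R g (cl s) (snd x)) \<in> borel_measurable (?N \<Otimes>\<^sub>M lborel)"
      using borel_measurable_scaleR[OF im gm] by (simp add: case_prod_beta')
  qed
  show "(\<lambda>(t, \<omega>). LINT s:{0..t}|lborel. g s \<omega>) \<in> borel_measurable ?N"
  proof (rule measurable_cong[THEN iffD1, OF _ int_m])
    fix x assume x: "x \<in> space ?N"
    then have "fst x \<le> T" by (auto simp: space_pair_measure)
    then show "(\<integral>s. indicator {0..fst x} s *\<^sub>R g (cl s) (snd x) \<partial>lborel) = (\<lambda>(t, \<omega>). LINT s:{0..t}|lborel. g s \<omega>) x"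
      unfolding set_lebesgue_integral_def
      by (auto simp: case_prod_beta' cl_def intro!: Bochner_Integration.integral_cong split: split_indicator)
  qed
qed



lemma cont_bounded:
  fixes f :: "real \<Rightarrow> 'b::real_normed_vector"
  assumes "continuous_on {0..} f"
  shows "\<exists>B. \<forall>s\<in>{0..T}. norm (f s) \<le> B"
proof -
  have "continuous_on {0..T} f" by (rule continuous_on_subset[OF assms]) auto
  then have "compact (f ` {0..T})" by (rule compact_continuous_image) simp
  then have "bounded (f ` {0..T})" by (rule compact_imp_bounded)
  then show ?thesis unfolding Elementary_Metric_Spaces.bounded_iff by auto
qed

lemma cont_bounded0:
  fixes f :: "real \<Rightarrow> 'b::real_normed_vector"
  assumes "continuous_on {0..} f"
  shows "\<exists>B\<ge>0. \<forall>s\<in>{0..T}. norm (f s) \<le> B"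
proof -
  obtain B where "\<forall>s\<in>{0..T}. norm (f s) \<le> B" using cont_bounded[OF assms] by blast
  then show ?thesis by (intro exI[of _ "max B 0"]) (auto simp: le_max_iff_disj)
qed

locale sde =
  fixes E :: "('i::finite \<times> 'j::finite) set"
    and \<mu> :: "'i \<Rightarrow> 'j \<Rightarrow> real" and \<theta> r l :: "'i \<Rightarrow> real"
    and x :: "real^'i"
    and M :: "'a measure" and F :: "real \<Rightarrow> 'a measure"
    and U :: "real \<Rightarrow> 'a \<Rightarrow> (real^'i) \<times> (real^'j)" and W :: "real \<Rightarrow> 'a \<Rightarrow> real^'i"
  assumes tree: "is_tree E" and th: "\<And>i. \<theta> i \<ge> 0" and adm: "admissible M F U W"
begin

lemma filt: "filtration_on M F" using adm by (simp add: admissible_def)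
lemma pU: "prog_measurable F U" using adm by (simp add: admissible_def)
lemma UUv: "0 \<le> t \<Longrightarrow> \<omega> \<in> space M \<Longrightarrow> U t \<omega> \<in> UU" using adm by (simp add: admissible_def)
lemma Wad: "adapted F W" using adm by (simp add: admissible_def brownian_motion_def)
lemma Wc: "\<omega> \<in> space M \<Longrightarrow> continuous_on {0..} (\<lambda>t. W t \<omega>)"
  using adm by (simp add: admissible_def brownian_motion_def)

abbreviation bb where "bb \<equiv> bdr E \<mu> \<theta> l"

definition Lc where
  "Lc = (SOME L. 0 \<le> L \<and> (\<forall>p q u. u \<in> UU \<longrightarrow> norm (bb p u - bb q u) \<le> L * norm (p - q)))"

lemma Lc_ex: "\<exists>L. 0 \<le> L \<and> (\<forall>p q u. u \<in> UU \<longrightarrow> norm (bb p u - bb q u) \<le> L * norm (p - q))"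
proof (rule bdr_lip[where E=E and \<theta>=\<theta> and \<mu>=\<mu> and l=l, OF tree th])
  fix L assume L: "0 \<le> L" "\<And>p q U. U \<in> UU \<Longrightarrow> norm (bb p U - bb q U) \<le> L * norm (p - q)"
  show ?thesis by (intro exI[of _ L] conjI allI impI L)
qed

lemma Lc_prop: "0 \<le> Lc \<and> (\<forall>p q u. u \<in> UU \<longrightarrow> norm (bb p u - bb q u) \<le> Lc * norm (p - q))"
  unfolding Lc_def by (rule someI_ex[OF Lc_ex])

lemma Lc0: "0 \<le> Lc" using Lc_prop by blast
lemma Lc_lip: "u \<in> UU \<Longrightarrow> norm (bb p u - bb q u) \<le> Lc * norm (p - q)" using Lc_prop by blast

lemma bb_growth: "u \<in> UU \<Longrightarrow> norm (bb p u) \<le> norm (\<chi> i. l i) + Lc * norm p"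
proof -
  assume u: "u \<in> UU"
  have "norm (bb p u) \<le> norm (bb 0 u) + norm (bb p u - bb 0 u)" by (rule norm_triangle_sub)
  also have "\<dots> \<le> Lc * norm p + norm (\<chi> i. l i)"
    using Lc_lip[OF u, of p 0] bdr_zero[OF tree] by simp
  finally show ?thesis by simp
qed

definition w where "w t \<omega> = x + (\<chi> i. r i * W t \<omega> $ i)"

lemma w_cont: "\<omega> \<in> space M \<Longrightarrow> continuous_on {0..} (\<lambda>t. w t \<omega>)"
  unfolding w_def by (intro continuous_intros Wc)

lemma w_prog: "prog_measurable F w"
proof (rule cont_adapted_prog[OF filt _ w_cont])
  have c: "continuous_on UNIV (\<lambda>v::real^'i. x + (\<chi> i. r i * v $ i))" by (intro continuous_intros)
  show "adapted F w" unfolding adapted_def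
  proof (intro allI impI)
    fix t :: real assume "0 \<le> t"
    then have "W t \<in> borel_measurable (F t)" using Wad by (simp add: adapted_def)
    from measurable_compose[OF this borel_measurable_continuous_onI[OF c]]
    moreover have "w t = (\<lambda>\<omega>. x + (\<chi> i. r i * W t \<omega> $ i))" by (simp add: w_def fun_eq_iff)
    ultimately show "w t \<in> borel_measurable (F t)" by simp
  qed
qed

definition Phi where "Phi Z = (\<lambda>t \<omega>. w t \<omega> + (LINT s:{0..t}|lborel. bb (Z s \<omega>) (U s \<omega>)))"

lemma gZ_prog: "prog_measurable F Z \<Longrightarrow> prog_measurable F (\<lambda>s \<omega>. bb (Z s \<omega>) (U s \<omega>))"
  by (rule prog_compose[OF _ pU bdr_cont[OF tree]])

lemma gZ_bnd:
  assumes \<omega>: "\<omega> \<in> space M" and s: "s \<in> {0..t}" and B: "norm (Z s \<omega>) \<le> B"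
  shows "norm (bb (Z s \<omega>) (U s \<omega>)) \<le> norm (\<chi> i. l i) + Lc * B"
proof -
  have "norm (bb (Z s \<omega>) (U s \<omega>)) \<le> norm (\<chi> i. l i) + Lc * norm (Z s \<omega>)"
    by (rule bb_growth[OF UUv]) (use s \<omega> in auto)
  also have "\<dots> \<le> norm (\<chi> i. l i) + Lc * B" using B Lc0 by (intro add_left_mono mult_left_mono) auto
  finally show ?thesis .
qed

lemma gZ_int:
  assumes pZ: "prog_measurable F Z" and \<omega>: "\<omega> \<in> space M" and t: "0 \<le> t"
    and B: "\<And>s. s \<in> {0..t} \<Longrightarrow> norm (Z s \<omega>) \<le> B"
  shows "set_integrable lborel {0..t} (\<lambda>s. bb (Z s \<omega>) (U s \<omega>))"
proof (rule prog_integrable[OF filt gZ_prog[OF pZ] t \<omega>])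
  fix s assume s: "s \<in> {0..t}"
  show "norm (bb (Z s \<omega>) (U s \<omega>)) \<le> norm (\<chi> i. l i) + Lc * B" by (rule gZ_bnd[where Z=Z, OF \<omega> s B[OF s]])
qed

lemma Phi_cont:
  assumes pZ: "prog_measurable F Z" and \<omega>: "\<omega> \<in> space M"
    and B: "\<And>T. 0 \<le> T \<Longrightarrow> \<exists>B. \<forall>s\<in>{0..T}. norm (Z s \<omega>) \<le> B"
  shows "continuous_on {0..} (\<lambda>t. Phi Z t \<omega>)"
  unfolding Phi_def
proof (intro continuous_on_add w_cont[OF \<omega>] indef_cont)
  fix T :: real assume T: "0 \<le> T"
  obtain B0 where B0: "\<forall>s\<in>{0..T}. norm (Z s \<omega>) \<le> B0" using B[OF T] by blast
  show "set_integrable lborel {0..T} (\<lambda>s. bb (Z s \<omega>) (U s \<omega>))"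
    by (rule gZ_int[OF pZ \<omega> T]) (use B0 in auto)
  show "\<exists>B. \<forall>s\<in>{0..T}. norm (bb (Z s \<omega>) (U s \<omega>)) \<le> B"
    using gZ_bnd[OF \<omega>, of _ T Z B0] B0 by blast
qed

definition good where
  "good Z \<longleftrightarrow> prog_measurable F Z \<and> (\<forall>\<omega>\<in>space M. continuous_on {0..} (\<lambda>t. Z t \<omega>))"

lemma Phi_prog: "prog_measurable F Z \<Longrightarrow> prog_measurable F (Phi Z)"
  unfolding Phi_def by (rule prog_add[OF w_prog prog_integral[OF filt gZ_prog]])

lemma Phi_good: assumes "good Z" shows "good (Phi Z)"
proof -
  have p: "prog_measurable F Z" and c: "\<And>\<omega>. \<omega> \<in> space M \<Longrightarrow> continuous_on {0..} (\<lambda>t. Z t \<omega>)"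
    using assms by (auto simp: good_def)
  have "continuous_on {0..} (\<lambda>t. Phi Z t \<omega>)" if "\<omega> \<in> space M" for \<omega>
    by (rule Phi_cont[OF p that]) (rule cont_bounded[OF c[OF that]])
  then show ?thesis unfolding good_def using Phi_prog[OF p] by blast
qed

definition Pic where "Pic n = (Phi ^^ n) w"

lemma Pic_0: "Pic 0 = w" and Pic_Suc: "Pic (Suc n) = Phi (Pic n)"
  by (simp_all add: Pic_def)

lemma Pic_good: "good (Pic n)"
proof (induction n)
  case 0 show ?case unfolding Pic_0 good_def using w_prog w_cont by blast
next
  case (Suc n) then show ?case unfolding Pic_Suc by (rule Phi_good)
qed

lemma Pic_prog: "prog_measurable F (Pic n)" and Pic_cont: "\<omega> \<in> space M \<Longrightarrow> continuous_on {0..} (\<lambda>t. Pic n t \<omega>)"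
  using Pic_good[of n] by (auto simp: good_def)

lemma Pic_int:
  assumes \<omega>: "\<omega> \<in> space M" and t: "0 \<le> t"
  shows "set_integrable lborel {0..t} (\<lambda>s. bb (Pic n s \<omega>) (U s \<omega>))"
proof -
  obtain B where "\<forall>s\<in>{0..t}. norm (Pic n s \<omega>) \<le> B" using cont_bounded[OF Pic_cont[OF \<omega>]] by blast
  then show ?thesis by (intro gZ_int[OF Pic_prog \<omega> t]) auto
qed

lemma Pic_diff_bound:
  assumes \<omega>: "\<omega> \<in> space M" and T: "0 \<le> T"
  shows "\<exists>C\<ge>0. \<forall>n. \<forall>t\<in>{0..T}. norm (Pic (Suc n) t \<omega> - Pic n t \<omega>) \<le> C * (Lc * t) ^ n / fact n"
proof -
  have "continuous_on {0..} (\<lambda>t. Pic (Suc 0) t \<omega> - Pic 0 t \<omega>)"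
    by (intro continuous_on_diff Pic_cont[OF \<omega>])
  then obtain C where C: "C \<ge> 0" "\<forall>s\<in>{0..T}. norm (Pic (Suc 0) s \<omega> - Pic 0 s \<omega>) \<le> C"
    using cont_bounded0 by blast
  have "\<forall>t\<in>{0..T}. norm (Pic (Suc n) t \<omega> - Pic n t \<omega>) \<le> C * (Lc * t) ^ n / fact n" for n
  proof (induction n)
    case 0 then show ?case using C by simp
  next
    case (Suc n)
    show ?case
    proof
      fix t assume t: "t \<in> {0..T}"
      have i1: "set_integrable lborel {0..t} (\<lambda>s. bb (Pic (Suc n) s \<omega>) (U s \<omega>))"
        and i2: "set_integrable lborel {0..t} (\<lambda>s. bb (Pic n s \<omega>) (U s \<omega>))"
        using Pic_int[OF \<omega>] t by auto
      have "Pic (Suc (Suc n)) t \<omega> - Pic (Suc n) t \<omega>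
          = (LINT s:{0..t}|lborel. bb (Pic (Suc n) s \<omega>) (U s \<omega>)) - (LINT s:{0..t}|lborel. bb (Pic n s \<omega>) (U s \<omega>))"
        by (simp add: Pic_Suc[of "Suc n"] Pic_Suc[of n] Phi_def)
      also have "\<dots> = (LINT s:{0..t}|lborel. bb (Pic (Suc n) s \<omega>) (U s \<omega>) - bb (Pic n s \<omega>) (U s \<omega>))"
        using set_integral_diff(2)[OF i1 i2] by simp
      finally have eq: "Pic (Suc (Suc n)) t \<omega> - Pic (Suc n) t \<omega> = \<dots>" .
      have "norm (LINT s:{0..t}|lborel. bb (Pic (Suc n) s \<omega>) (U s \<omega>) - bb (Pic n s \<omega>) (U s \<omega>))
            \<le> C * (Lc * t) ^ Suc n / fact (Suc n)"
      proof (rule iter_step[OF _ Lc0 C(1) set_integral_diff(1)[OF i1 i2]])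
        show "0 \<le> t" using t by simp
        fix s assume s: "s \<in> {0..t}"
        have "norm (bb (Pic (Suc n) s \<omega>) (U s \<omega>) - bb (Pic n s \<omega>) (U s \<omega>)) \<le> Lc * norm (Pic (Suc n) s \<omega> - Pic n s \<omega>)"
          by (rule Lc_lip[OF UUv]) (use s \<omega> in auto)
        also have "\<dots> \<le> Lc * (C * (Lc * s) ^ n / fact n)"
          using Suc.IH s t Lc0 by (intro mult_left_mono) auto
        finally show "norm (bb (Pic (Suc n) s \<omega>) (U s \<omega>) - bb (Pic n s \<omega>) (U s \<omega>)) \<le> Lc * (C * (Lc * s) ^ n / fact n)" .
      qed
      then show "norm (Pic (Suc (Suc n)) t \<omega> - Pic (Suc n) t \<omega>) \<le> C * (Lc * t) ^ Suc n / fact (Suc n)"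
        using eq by simp
    qed
  qed
  then show ?thesis using C(1) by blast
qed

definition Xs where "Xs t \<omega> = lim (\<lambda>n. Pic n t \<omega>)"

lemma Pic_conv:
  assumes \<omega>: "\<omega> \<in> space M" and T: "0 \<le> T"
  shows "\<exists>eps. eps \<longlonglongrightarrow> 0 \<and> (\<forall>n. 0 \<le> eps n) \<and>
           (\<forall>n. \<forall>t\<in>{0..T}. norm (Xs t \<omega> - Pic n t \<omega>) \<le> eps n) \<and>
           (\<forall>t\<in>{0..T}. (\<lambda>n. Pic n t \<omega>) \<longlonglongrightarrow> Xs t \<omega>)"
proof -
  obtain C where C: "C \<ge> 0" "\<And>n t. t \<in> {0..T} \<Longrightarrow> norm (Pic (Suc n) t \<omega> - Pic n t \<omega>) \<le> C * (Lc * t) ^ n / fact n"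
    using Pic_diff_bound[OF \<omega> T] by blast
  define a where "a k = C * (Lc * T) ^ k / fact k" for k
  have sa: "summable a"
  proof -
    have "summable (\<lambda>k. C * (inverse (fact k) * (Lc * T) ^ k))"
      by (rule summable_mult[OF summable_exp])
    then show ?thesis unfolding a_def by (simp add: field_simps)
  qed
  have a0: "0 \<le> a k" for k using C Lc0 T by (simp add: a_def)
  define eps where "eps n = (\<Sum>k. a (k + n))" for n
  have eps_eq: "eps n = suminf a - (\<Sum>k<n. a k)" for n
    using suminf_split_initial_segment[OF sa, of n] by (simp add: eps_def)
  have eps_lim: "eps \<longlonglongrightarrow> 0"
  proof -
    have "(\<lambda>n. suminf a - (\<Sum>k<n. a k)) \<longlonglongrightarrow> suminf a - suminf a"
      by (intro tendsto_diff tendsto_const summable_LIMSEQ[OF sa])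
    then show ?thesis by (simp add: eps_eq[abs_def])
  qed
  have eps0: "0 \<le> eps n" for n
    unfolding eps_def by (rule suminf_nonneg[OF summable_ignore_initial_segment[OF sa]]) (simp add: a0)
  have main: "norm (Xs t \<omega> - Pic n t \<omega>) \<le> eps n \<and> (\<lambda>n. Pic n t \<omega>) \<longlonglongrightarrow> Xs t \<omega>" if t: "t \<in> {0..T}" for t n
  proof -
    define d where "d k = Pic (Suc k) t \<omega> - Pic k t \<omega>" for k
    have dle: "norm (d k) \<le> a k" for k
    proof -
      have "norm (d k) \<le> C * (Lc * t) ^ k / fact k" unfolding d_def by (rule C(2)[OF t])
      also have "\<dots> \<le> a k" unfolding a_def
        using t Lc0 C(1) by (intro divide_right_mono mult_left_mono power_mono mult_left_mono) auto
      finally show ?thesis .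
    qed
    have sd: "summable d" by (rule summable_comparison_test'[OF sa dle])
    have Pn: "Pic m t \<omega> = Pic 0 t \<omega> + (\<Sum>k<m. d k)" for m
      unfolding d_def using sum_lessThan_telescope[of "\<lambda>k. Pic k t \<omega>" m] by simp
    have lim0: "(\<lambda>m. Pic 0 t \<omega> + (\<Sum>k<m. d k)) \<longlonglongrightarrow> Pic 0 t \<omega> + suminf d"
      by (intro tendsto_add tendsto_const summable_LIMSEQ[OF sd])
    have lim: "(\<lambda>m. Pic m t \<omega>) \<longlonglongrightarrow> Pic 0 t \<omega> + suminf d"
      using lim0 by (simp only: Pn[symmetric])
    then have Xeq: "Xs t \<omega> = Pic 0 t \<omega> + suminf d" unfolding Xs_def by (rule limI)
    have "Xs t \<omega> - Pic n t \<omega> = suminf d - (\<Sum>k<n. d k)"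
      by (subst Xeq, subst Pn[of n]) simp
    also have "\<dots> = (\<Sum>k. d (k + n))" using suminf_split_initial_segment[OF sd, of n] by simp
    finally have "norm (Xs t \<omega> - Pic n t \<omega>) = norm (\<Sum>k. d (k + n))" by simp
    also have "\<dots> \<le> (\<Sum>k. a (k + n))"
      by (rule norm_suminf_le[OF dle summable_ignore_initial_segment[OF sa]])
    finally have "norm (Xs t \<omega> - Pic n t \<omega>) \<le> eps n" unfolding eps_def .
    then show ?thesis using lim Xeq by simp
  qed
  show ?thesis
    by (intro exI[of _ eps] conjI allI ballI eps_lim eps0) (use main in blast)+
qed

lemma Xs_prog: "prog_measurable F Xs"
  unfolding prog_measurable_def
proof (intro allI impI)
  fix T :: real assume T: "0 \<le> T"
  let ?N = "restrict_space lborel {0..T} \<Otimes>\<^sub>M F T"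
  have m: "(\<lambda>(s, \<omega>). Pic n s \<omega>) \<in> borel_measurable ?N" for n
    using Pic_prog[of n] T unfolding prog_measurable_def by auto
  show "(\<lambda>(s, \<omega>). Xs s \<omega>) \<in> borel_measurable ?N"
  proof (rule borel_measurable_LIMSEQ_metric[OF m])
    fix z assume z: "z \<in> space ?N"
    obtain s \<omega> where zs: "z = (s, \<omega>)" by (cases z)
    have s: "s \<in> {0..T}" and \<omega>: "\<omega> \<in> space M" using z space_F[OF filt T] by (auto simp: zs space_pair_measure)
    show "(\<lambda>n. (\<lambda>(s, \<omega>). Pic n s \<omega>) z) \<longlonglongrightarrow> (\<lambda>(s, \<omega>). Xs s \<omega>) z"
      using Pic_conv[OF \<omega> T] s by (auto simp: zs)
  qed
qed

lemma Xs_bnd: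
  assumes \<omega>: "\<omega> \<in> space M" and T: "0 \<le> T"
  shows "\<exists>B. \<forall>s\<in>{0..T}. norm (Xs s \<omega>) \<le> B"
proof -
  obtain eps where eps: "\<And>n t. t \<in> {0..T} \<Longrightarrow> norm (Xs t \<omega> - Pic n t \<omega>) \<le> eps n"
    using Pic_conv[OF \<omega> T] by blast
  obtain B0 where B0: "\<forall>s\<in>{0..T}. norm (Pic 0 s \<omega>) \<le> B0" using cont_bounded[OF Pic_cont[OF \<omega>]] by blast
  have "norm (Xs s \<omega>) \<le> B0 + eps 0" if s: "s \<in> {0..T}" for s
  proof -
    have "norm (Xs s \<omega>) \<le> norm (Pic 0 s \<omega>) + norm (Xs s \<omega> - Pic 0 s \<omega>)" by (rule norm_triangle_sub)
    moreover have "norm (Pic 0 s \<omega>) \<le> B0" using B0 s by blast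
    ultimately show ?thesis using eps[OF s, of 0] by linarith
  qed
  then show ?thesis by blast
qed

lemma Xs_int:
  assumes \<omega>: "\<omega> \<in> space M" and t: "0 \<le> t"
  shows "set_integrable lborel {0..t} (\<lambda>s. bb (Xs s \<omega>) (U s \<omega>))"
proof -
  obtain B where "\<forall>s\<in>{0..t}. norm (Xs s \<omega>) \<le> B" using Xs_bnd[OF \<omega> t] by blast
  then show ?thesis by (intro gZ_int[OF Xs_prog \<omega> t]) auto
qed

lemma Xs_eq:
  assumes \<omega>: "\<omega> \<in> space M" and t: "0 \<le> t"
  shows "Xs t \<omega> = w t \<omega> + (LINT s:{0..t}|lborel. bb (Xs s \<omega>) (U s \<omega>))"
proof -
  from Pic_conv[OF \<omega> t] obtain eps where e1: "eps \<longlonglongrightarrow> 0" and e2: "\<forall>n. 0 \<le> eps n"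
    and e3: "\<forall>n. \<forall>s\<in>{0..t}. norm (Xs s \<omega> - Pic n s \<omega>) \<le> eps n"
    and e4: "\<forall>s\<in>{0..t}. (\<lambda>n. Pic n s \<omega>) \<longlonglongrightarrow> Xs s \<omega>"
    by (elim exE conjE)
  have eps: "eps \<longlonglongrightarrow> 0" "\<And>n. 0 \<le> eps n"
    "\<And>n s. s \<in> {0..t} \<Longrightarrow> norm (Xs s \<omega> - Pic n s \<omega>) \<le> eps n"
    "\<And>s. s \<in> {0..t} \<Longrightarrow> (\<lambda>n. Pic n s \<omega>) \<longlonglongrightarrow> Xs s \<omega>"
    using e1 e2 e3 e4 by auto
  let ?IX = "LINT s:{0..t}|lborel. bb (Xs s \<omega>) (U s \<omega>)"
  let ?IP = "\<lambda>n. LINT s:{0..t}|lborel. bb (Pic n s \<omega>) (U s \<omega>)"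
  have bound: "norm (?IP n - ?IX) \<le> norm (eps n) * (Lc * t)" for n
  proof -
    have eq1: "?IP n - ?IX = (LINT s:{0..t}|lborel. bb (Pic n s \<omega>) (U s \<omega>) - bb (Xs s \<omega>) (U s \<omega>))"
      using set_integral_diff(2)[OF Pic_int[OF \<omega> t] Xs_int[OF \<omega> t]] by simp
    have le1: "norm (LINT s:{0..t}|lborel. bb (Pic n s \<omega>) (U s \<omega>) - bb (Xs s \<omega>) (U s \<omega>)) \<le> (Lc * eps n) * measure lborel {0..t}"
    proof (rule set_norm_bound)
      show "set_integrable lborel {0..t} (\<lambda>s. bb (Pic n s \<omega>) (U s \<omega>) - bb (Xs s \<omega>) (U s \<omega>))"
        by (rule set_integral_diff(1)[OF Pic_int[OF \<omega> t] Xs_int[OF \<omega> t]])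
      fix s assume s: "s \<in> {0..t}"
      have "norm (bb (Pic n s \<omega>) (U s \<omega>) - bb (Xs s \<omega>) (U s \<omega>)) \<le> Lc * norm (Pic n s \<omega> - Xs s \<omega>)"
        by (rule Lc_lip[OF UUv]) (use s \<omega> in auto)
      also have "\<dots> \<le> Lc * eps n"
      proof (rule mult_left_mono[OF _ Lc0])
        have "norm (Pic n s \<omega> - Xs s \<omega>) = norm (Xs s \<omega> - Pic n s \<omega>)" by (rule norm_minus_commute)
        then show "norm (Pic n s \<omega> - Xs s \<omega>) \<le> eps n" using eps(3)[OF s, of n] by simp
      qed
      finally show "norm (bb (Pic n s \<omega>) (U s \<omega>) - bb (Xs s \<omega>) (U s \<omega>)) \<le> Lc * eps n" .
    next
      show "{0..t} \<in> sets lborel" by simp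
      show "emeasure lborel {0..t} < \<infinity>" using t by (simp add: ennreal_less_top)
    qed
    have le2: "norm (?IP n - ?IX) \<le> (Lc * eps n) * measure lborel {0..t}" unfolding eq1 by (rule le1)
    have m: "measure lborel {0..t} = t" using t by simp
    have ne: "norm (eps n) = eps n" using eps(2)[of n] by simp
    have eqn: "(Lc * eps n) * t = norm (eps n) * (Lc * t)" unfolding ne by (simp add: ac_simps)
    have le3: "norm (?IP n - ?IX) \<le> (Lc * eps n) * t" using le2 by (simp only: m)
    show ?thesis using le3 eqn by linarith
  qed
  have "(\<lambda>n. ?IP n - ?IX) \<longlonglongrightarrow> 0"
    by (rule tendsto_0_le[OF eps(1), where K="Lc * t"]) (intro always_eventually allI bound)
  then have "?IP \<longlonglongrightarrow> ?IX" by (simp add: LIM_zero_iff)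
  then have l1: "(\<lambda>n. Pic (Suc n) t \<omega>) \<longlonglongrightarrow> w t \<omega> + ?IX"
    unfolding Pic_Suc Phi_def by (intro tendsto_add tendsto_const)
  have l2: "(\<lambda>n. Pic (Suc n) t \<omega>) \<longlonglongrightarrow> Xs t \<omega>"
    by (rule LIMSEQ_Suc[OF eps(4)]) (use t in auto)
  show ?thesis using LIMSEQ_unique[OF l2 l1] .
qed

lemma Xs_cont:
  assumes \<omega>: "\<omega> \<in> space M"
  shows "continuous_on {0..} (\<lambda>t. Xs t \<omega>)"
proof -
  have "continuous_on {0..} (\<lambda>t. Phi Xs t \<omega>)"
    by (rule Phi_cont[OF Xs_prog \<omega> Xs_bnd[OF \<omega>]])
  then show ?thesis
  proof (rule continuous_on_eq)
    fix t :: real assume "t \<in> {0..}"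
    then show "Phi Xs t \<omega> = Xs t \<omega>" unfolding Phi_def by (subst (2) Xs_eq[OF \<omega>]) auto
  qed
qed

lemma drift_eq:
  assumes \<omega>: "\<omega> \<in> space M" and s: "0 \<le> s"
  shows "drift E \<mu> \<theta> l p (U s \<omega>) = bb p (U s \<omega>)"
  using UU_esum[OF UUv[OF s \<omega>]] by (intro drift_bdr) auto

lemma drift_int_iff:
  assumes \<omega>: "\<omega> \<in> space M"
  shows "set_integrable lborel {0..t} (\<lambda>s. drift E \<mu> \<theta> l (Z s) (U s \<omega>)) \<longleftrightarrow>
         set_integrable lborel {0..t} (\<lambda>s. bb (Z s) (U s \<omega>))"
  unfolding set_integrable_def
  by (rule Bochner_Integration.integrable_cong[OF refl]) (auto simp: drift_eq[OF \<omega>] split: split_indicator)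

lemma drift_int_eq:
  assumes \<omega>: "\<omega> \<in> space M"
  shows "(LINT s:{0..t}|lborel. drift E \<mu> \<theta> l (Z s) (U s \<omega>)) = (LINT s:{0..t}|lborel. bb (Z s) (U s \<omega>))"
  by (rule set_lebesgue_integral_cong) (auto simp: drift_eq[OF \<omega>])

lemma existence: "controlled_process E \<mu> \<theta> r l x M F U W Xs"
  unfolding controlled_process_def
proof (intro conjI ballI)
  show "continuous_on {0..} (\<lambda>t. Xs t \<omega>)" if "\<omega> \<in> space M" for \<omega> by (rule Xs_cont[OF that])
  show "adapted F Xs" unfolding adapted_def using prog_adapted[OF filt Xs_prog] by blast
  show "AE \<omega> in M. \<forall>t\<ge>0. set_integrable lborel {0..t} (\<lambda>s. drift E \<mu> \<theta> l (Xs s \<omega>) (U s \<omega>)) \<and>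
          Xs t \<omega> = x + (\<chi> i. r i * W t \<omega> $ i) + (LINT s:{0..t}|lborel. drift E \<mu> \<theta> l (Xs s \<omega>) (U s \<omega>))"
  proof (rule AE_I2, intro allI impI conjI)
    fix \<omega> t assume \<omega>: "\<omega> \<in> space M" and t: "0 \<le> (t::real)"
    show "set_integrable lborel {0..t} (\<lambda>s. drift E \<mu> \<theta> l (Xs s \<omega>) (U s \<omega>))"
      using Xs_int[OF \<omega> t] drift_int_iff[OF \<omega>, where Z="\<lambda>s. Xs s \<omega>" and t=t] by blast
    show "Xs t \<omega> = x + (\<chi> i. r i * W t \<omega> $ i) + (LINT s:{0..t}|lborel. drift E \<mu> \<theta> l (Xs s \<omega>) (U s \<omega>))"
      unfolding drift_int_eq[OF \<omega>, where Z="\<lambda>s. Xs s \<omega>" and t=t]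
      by (subst Xs_eq[OF \<omega> t]) (simp add: w_def)
  qed
qed

lemma uniq_path:
  assumes \<omega>: "\<omega> \<in> space M"
    and c1: "continuous_on {0..} (\<lambda>t. Ya t \<omega>)" and c2: "continuous_on {0..} (\<lambda>t. Yb t \<omega>)"
    and h1: "\<forall>t\<ge>0. set_integrable lborel {0..t} (\<lambda>s. drift E \<mu> \<theta> l (Ya s \<omega>) (U s \<omega>)) \<and>
          Ya t \<omega> = x + (\<chi> i. r i * W t \<omega> $ i) + (LINT s:{0..t}|lborel. drift E \<mu> \<theta> l (Ya s \<omega>) (U s \<omega>))"
    and h2: "\<forall>t\<ge>0. set_integrable lborel {0..t} (\<lambda>s. drift E \<mu> \<theta> l (Yb s \<omega>) (U s \<omega>)) \<and>
          Yb t \<omega> = x + (\<chi> i. r i * W t \<omega> $ i) + (LINT s:{0..t}|lborel. drift E \<mu> \<theta> l (Yb s \<omega>) (U s \<omega>))"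
    and t: "0 \<le> t"
  shows "Ya t \<omega> = Yb t \<omega>"
proof -
  define D where "D s = Ya s \<omega> - Yb s \<omega>" for s
  have cD: "continuous_on {0..} D" unfolding D_def by (intro continuous_on_diff c1 c2)
  obtain C where C: "C \<ge> 0" "\<forall>s\<in>{0..t}. norm (D s) \<le> C" using cont_bounded0[OF cD] by blast
  have i1: "set_integrable lborel {0..s} (\<lambda>r. bb (Ya r \<omega>) (U r \<omega>))" if "0 \<le> s" for s
    using h1 that drift_int_iff[OF \<omega>, where Z="\<lambda>r. Ya r \<omega>" and t=s] by blast
  have i2: "set_integrable lborel {0..s} (\<lambda>r. bb (Yb r \<omega>) (U r \<omega>))" if "0 \<le> s" for s
    using h2 that drift_int_iff[OF \<omega>, where Z="\<lambda>r. Yb r \<omega>" and t=s] by blast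
  have Deq: "D s = (LINT r:{0..s}|lborel. bb (Ya r \<omega>) (U r \<omega>) - bb (Yb r \<omega>) (U r \<omega>))" if s: "0 \<le> s" for s
  proof -
    have e1: "Ya s \<omega> = x + (\<chi> i. r i * W s \<omega> $ i) + (LINT r:{0..s}|lborel. bb (Ya r \<omega>) (U r \<omega>))"
      using h1 s drift_int_eq[OF \<omega>, where Z="\<lambda>r. Ya r \<omega>" and t=s] by metis
    have e2: "Yb s \<omega> = x + (\<chi> i. r i * W s \<omega> $ i) + (LINT r:{0..s}|lborel. bb (Yb r \<omega>) (U r \<omega>))"
      using h2 s drift_int_eq[OF \<omega>, where Z="\<lambda>r. Yb r \<omega>" and t=s] by metis
    have "D s = (LINT r:{0..s}|lborel. bb (Ya r \<omega>) (U r \<omega>)) - (LINT r:{0..s}|lborel. bb (Yb r \<omega>) (U r \<omega>))"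
      unfolding D_def by (subst e1, subst e2) simp
    also have "\<dots> = (LINT r:{0..s}|lborel. bb (Ya r \<omega>) (U r \<omega>) - bb (Yb r \<omega>) (U r \<omega>))"
      by (rule set_integral_diff(2)[OF i1[OF s] i2[OF s], symmetric])
    finally show ?thesis .
  qed
  have ind: "\<forall>s\<in>{0..t}. norm (D s) \<le> C * (Lc * s) ^ n / fact n" for n
  proof (induction n)
    case 0 then show ?case using C by simp
  next
    case (Suc n)
    show ?case
    proof
      fix s assume s: "s \<in> {0..t}"
      have "norm (LINT r:{0..s}|lborel. bb (Ya r \<omega>) (U r \<omega>) - bb (Yb r \<omega>) (U r \<omega>)) \<le> C * (Lc * s) ^ Suc n / fact (Suc n)"
      proof (rule iter_step[OF _ Lc0 C(1) set_integral_diff(1)[OF i1 i2]])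
        show "0 \<le> s" using s by simp
        show "0 \<le> s" using s by simp
        show "0 \<le> s" using s by simp
        fix q assume q: "q \<in> {0..s}"
        have "norm (bb (Ya q \<omega>) (U q \<omega>) - bb (Yb q \<omega>) (U q \<omega>)) \<le> Lc * norm (D q)"
          unfolding D_def by (rule Lc_lip[OF UUv]) (use q \<omega> in auto)
        also have "\<dots> \<le> Lc * (C * (Lc * q) ^ n / fact n)"
          using Suc.IH q s Lc0 by (intro mult_left_mono) auto
        finally show "norm (bb (Ya q \<omega>) (U q \<omega>) - bb (Yb q \<omega>) (U q \<omega>)) \<le> Lc * (C * (Lc * q) ^ n / fact n)" .
      qed
      then show "norm (D s) \<le> C * (Lc * s) ^ Suc n / fact (Suc n)" using Deq[of s] s by simp
    qed
  qed
  have lim: "(\<lambda>n. C * (Lc * t) ^ n / fact n) \<longlonglongrightarrow> 0"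
  proof -
    have "summable (\<lambda>n. C * (inverse (fact n) * (Lc * t) ^ n))"
      by (rule summable_mult[OF summable_exp])
    then have "summable (\<lambda>n. C * (Lc * t) ^ n / fact n)" by (simp add: field_simps)
    then show ?thesis by (rule summable_LIMSEQ_zero)
  qed
  have "norm (D t) \<le> 0"
    by (rule LIMSEQ_le_const[OF lim]) (use ind t in auto)
  then show ?thesis unfolding D_def by simp
qed

lemma uniqueness:
  assumes X1: "controlled_process E \<mu> \<theta> r l x M F U W X1"
    and X2: "controlled_process E \<mu> \<theta> r l x M F U W X2"
  shows "AE \<omega> in M. \<forall>t\<ge>0. X1 t \<omega> = X2 t \<omega>"
proof -
  have a1: "AE \<omega> in M. \<forall>t\<ge>0. set_integrable lborel {0..t} (\<lambda>s. drift E \<mu> \<theta> l (X1 s \<omega>) (U s \<omega>)) \<and>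
          X1 t \<omega> = x + (\<chi> i. r i * W t \<omega> $ i) + (LINT s:{0..t}|lborel. drift E \<mu> \<theta> l (X1 s \<omega>) (U s \<omega>))"
    using X1 unfolding controlled_process_def by blast
  have a2: "AE \<omega> in M. \<forall>t\<ge>0. set_integrable lborel {0..t} (\<lambda>s. drift E \<mu> \<theta> l (X2 s \<omega>) (U s \<omega>)) \<and>
          X2 t \<omega> = x + (\<chi> i. r i * W t \<omega> $ i) + (LINT s:{0..t}|lborel. drift E \<mu> \<theta> l (X2 s \<omega>) (U s \<omega>))"
    using X2 unfolding controlled_process_def by blast
  have c1: "\<And>\<omega>. \<omega> \<in> space M \<Longrightarrow> continuous_on {0..} (\<lambda>t. X1 t \<omega>)"
    using X1 unfolding controlled_process_def by blast
  have c2: "\<And>\<omega>. \<omega> \<in> space M \<Longrightarrow> continuous_on {0..} (\<lambda>t. X2 t \<omega>)"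
    using X2 unfolding controlled_process_def by blast
  show ?thesis
    using a1 a2 AE_space
  proof (eventually_elim)
    case (elim \<omega>)
    show ?case using uniq_path[where Ya=X1 and Yb=X2, OF elim(3) c1[OF elim(3)] c2[OF elim(3)] elim(1) elim(2)] by blast
  qed
qed

end


theorem propositionA1:
  fixes E :: "('i::finite \<times> 'j::finite) set"
    and \<mu> :: "'i \<Rightarrow> 'j \<Rightarrow> real" and \<theta> r l :: "'i \<Rightarrow> real"
    and x :: "real^'i"
    and M :: "'a measure" and F :: "real \<Rightarrow> 'a measure"
    and U :: "real \<Rightarrow> 'a \<Rightarrow> (real^'i) \<times> (real^'j)" and W :: "real \<Rightarrow> 'a \<Rightarrow> real^'i"
  assumes "is_tree E"
    and "\<And>i j. (i, j) \<in> E \<Longrightarrow> \<mu> i j > 0"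
    and "\<And>i j. (i, j) \<notin> E \<Longrightarrow> \<mu> i j = 0"
    and "\<And>i. \<theta> i \<ge> 0"
    and "\<And>i. r i > 0"
    and "admissible M F U W"
  shows "(\<exists>X. controlled_process E \<mu> \<theta> r l x M F U W X) \<and>
         (\<forall>X X'. controlled_process E \<mu> \<theta> r l x M F U W X \<and>
                 controlled_process E \<mu> \<theta> r l x M F U W X'
                 \<longrightarrow> (AE \<omega> in M. \<forall>t\<ge>0. X t \<omega> = X' t \<omega>))"
proof -
  interpret sde E \<mu> \<theta> r l x M F U W
    by unfold_locales (use assms(1,4,6) in auto)
  show ?thesis using existence uniqueness by blast
qed

end
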